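(* Let $R=\mathbb{Z}[t]/(t^3)$ and let $p$ be a prime. For complex $s_1,s_2$ with real parts sufficiently large, \[ \zeta_{R,p}(s_1,s_2)=(1-p^{-1})^{-2}\int_{\substack{(x,y,z)\in\mathbb{Z}_p^3\\ |z|^2\le|x|}} |x|^{s_1-2}\,|z|^{s_1-1}\,\max\{|x|,|y|,|z|\}^{s_2-s_1}\,dx\,dy\,dz , \] where $dx\,dy\,dz$ is the Haar measure on $\mathbb{Z}_p^3$ normalized to have total mass $1$, and $|\cdot|$ is the $p$-adic absolute value with $|p|=p^{-1}$.
   Context: Let $R=\mathbb{Z}[t]/(t^3)$, viewed as the additive group $\mathbb{Z}^3$ with basis $t^2,t,1$. A subring $S$ of $R$ means an additive subgroup of finite index that contains $1$ and is closed under multiplication. For a finite-index subgroup $S\subseteq R$ there are unique positive integers $\alpha_1(S),\alpha_2(S),\alpha_3(S)$ with $\alpha_{i+1}\mid\alpha_i$ and $R/S\cong \mathbb{Z}/\alpha_1\mathbb{Z}\oplus\mathbb{Z}/\alpha_2\mathbb{Z}\oplus\mathbb{Z}/\alpha_3\mathbb{Z}$. This tuple is called the cotype of $S$. For a subring $S$ one always has $\alpha_3(S)=1$. For a prime $p$ define \[ \zeta_{R,p}(s_1,s_2)=\sum_{S}\alpha_1(S)^{-s_1}\alpha_2(S)^{-s_2}, \] where the sum runs over all subrings $S$ of $R$ whose index $[R:S]$ is a power of $p$ (including index $1$). *)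

theory Defs
  imports "HOL-Probability.Probability"
begin

text \<open>An element (a, b, c) stands for a t^2 + b t + c.\<close>
type_synonym relt = "int \<times> int \<times> int"

definition radd :: "relt \<Rightarrow> relt \<Rightarrow> relt" where
  "radd u v = (case u of (a,b,c) \<Rightarrow> case v of (a',b',c') \<Rightarrow> (a+a', b+b', c+c'))"

definition rneg :: "relt \<Rightarrow> relt" where
  "rneg u = (case u of (a,b,c) \<Rightarrow> (-a, -b, -c))"

text \<open>(a t^2 + b t + c)(a' t^2 + b' t + c') modulo t^3.\<close>
definition rmul :: "relt \<Rightarrow> relt \<Rightarrow> relt" where
  "rmul u v = (case u of (a,b,c) \<Rightarrow> case v of (a',b',c') \<Rightarrow>
      (c*a' + b*b' + a*c', c*b' + b*c', c*c'))"

definition rone :: relt where "rone = (0, 0, 1)"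

definition additive_subgroup :: "relt set \<Rightarrow> bool" where
  "additive_subgroup S \<longleftrightarrow> (0,0,0) \<in> S \<and> (\<forall>u\<in>S. \<forall>v\<in>S. radd u v \<in> S) \<and> (\<forall>u\<in>S. rneg u \<in> S)"

definition coset :: "relt set \<Rightarrow> relt \<Rightarrow> relt set" where
  "coset S u = {radd u s | s. s \<in> S}"

definition finite_index :: "relt set \<Rightarrow> bool" where
  "finite_index S \<longleftrightarrow> finite (range (coset S))"

definition index :: "relt set \<Rightarrow> nat" where
  "index S = card (range (coset S))"

definition is_subring :: "relt set \<Rightarrow> bool" where
  "is_subring S \<longleftrightarrow> additive_subgroup S \<and> finite_index S \<and> rone \<in> S
      \<and> (\<forall>u\<in>S. \<forall>v\<in>S. rmul u v \<in> S)"

text \<open>R/S is isomorphic (as an abelian group) to Z/a1 + Z/a2 + Z/a3: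
  there is an additive map phi : Z^3 -> Z^3 inducing a bijection
  R/S -> (Z/a1 x Z/a2 x Z/a3), i.e. its kernel modulo (a1 Z x a2 Z x a3 Z) is exactly S
  and it is surjective modulo (a1 Z x a2 Z x a3 Z).\<close>
definition quotient_iso :: "relt set \<Rightarrow> nat \<Rightarrow> nat \<Rightarrow> nat \<Rightarrow> bool" where
  "quotient_iso S a1 a2 a3 \<longleftrightarrow> (\<exists>\<phi> :: relt \<Rightarrow> relt.
      (\<forall>u v. \<phi> (radd u v) = radd (\<phi> u) (\<phi> v)) \<and>
      (\<forall>u. u \<in> S \<longleftrightarrow> (case \<phi> u of (x,y,z) \<Rightarrow> int a1 dvd x \<and> int a2 dvd y \<and> int a3 dvd z)) \<and>
      (\<forall>x y z. \<exists>u. case \<phi> u of (x',y',z') \<Rightarrow>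
          int a1 dvd (x' - x) \<and> int a2 dvd (y' - y) \<and> int a3 dvd (z' - z)))"

definition is_cotype :: "relt set \<Rightarrow> nat \<times> nat \<times> nat \<Rightarrow> bool" where
  "is_cotype S a \<longleftrightarrow> (case a of (a1,a2,a3) \<Rightarrow>
      a1 > 0 \<and> a2 > 0 \<and> a3 > 0 \<and> a2 dvd a1 \<and> a3 dvd a2 \<and> quotient_iso S a1 a2 a3)"

definition cotype :: "relt set \<Rightarrow> nat \<times> nat \<times> nat" where
  "cotype S = (THE a. is_cotype S a)"

definition alpha1 :: "relt set \<Rightarrow> nat" where "alpha1 S = fst (cotype S)"
definition alpha2 :: "relt set \<Rightarrow> nat" where "alpha2 S = fst (snd (cotype S))"

definition zeta_term :: "relt set \<Rightarrow> complex \<Rightarrow> complex \<Rightarrow> complex" where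
  "zeta_term S s1 s2 = (of_nat (alpha1 S)) powr (- s1) * (of_nat (alpha2 S)) powr (- s2)"

definition p_subrings :: "nat \<Rightarrow> relt set set" where
  "p_subrings p = {S. is_subring S \<and> (\<exists>k. index S = p ^ k)}"

text \<open>An element of Z_p is represented by its p-adic digit sequence
  x = sum_i d_i p^i, d_i in {0..p-1}. The map Z_p -> {0..p-1}^N is a
  homeomorphism carrying the normalized Haar measure to the product of
  uniform probability measures on the digits.\<close>
definition Zp_haar :: "nat \<Rightarrow> (nat \<Rightarrow> nat) measure" where
  "Zp_haar p = PiM UNIV (\<lambda>_. uniform_count_measure {0..<p})"

definition padic_abs :: "nat \<Rightarrow> (nat \<Rightarrow> nat) \<Rightarrow> real" where
  "padic_abs p x = (if \<exists>i. x i \<noteq> 0 then real p powr (- real (LEAST i. x i \<noteq> 0)) else 0)"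

definition Zp3_haar :: "nat \<Rightarrow> ((nat \<Rightarrow> nat) \<times> (nat \<Rightarrow> nat) \<times> (nat \<Rightarrow> nat)) measure" where
  "Zp3_haar p = Zp_haar p \<Otimes>\<^sub>M (Zp_haar p \<Otimes>\<^sub>M Zp_haar p)"

definition integrand :: "nat \<Rightarrow> complex \<Rightarrow> complex \<Rightarrow>
    (nat \<Rightarrow> nat) \<times> (nat \<Rightarrow> nat) \<times> (nat \<Rightarrow> nat) \<Rightarrow> complex" where
  "integrand p s1 s2 w = (case w of (x,y,z) \<Rightarrow>
     if (padic_abs p z)^2 \<le> padic_abs p x then
       (of_real (padic_abs p x)) powr (s1 - 2) * (of_real (padic_abs p z)) powr (s1 - 1)
       * (of_real (max (padic_abs p x) (max (padic_abs p y) (padic_abs p z)))) powr (s2 - s1)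
     else 0)"

end

theory Submission
  imports Defs "HOL-Computational_Algebra.Primes"
begin
lemma pow_dvd_digits:
  fixes p y :: nat assumes "p > 1"
  shows "p^k dvd y \<longleftrightarrow> (\<forall>i<k. y div p^i mod p = 0)"
proof (induction k)
  case 0 then show ?case by simp
next
  case (Suc k)
  have "p^Suc k dvd y \<longleftrightarrow> p^k dvd y \<and> y div p^k mod p = 0"
  proof
    assume h: "p^Suc k dvd y"
    then have "p^k dvd y" using dvd_trans le_imp_power_dvd[of k "Suc k" p] by auto
    moreover from h obtain q where "y = p^Suc k * q" by (auto elim: dvdE)
    then have "y div p^k = p * q" using assms by (simp add: power_Suc2 mult.assoc)
    ultimately show "p^k dvd y \<and> y div p^k mod p = 0" by simp
  next
    assume h: "p^k dvd y \<and> y div p^k mod p = 0"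
    then obtain q where q: "y = p^k * q" by (auto elim: dvdE)
    then have "y div p^k = q" using assms by simp
    with h have "p dvd q" by auto
    then show "p^Suc k dvd y" using q by (simp add: power_Suc2 mult_dvd_mono)
  qed
  also have "\<dots> \<longleftrightarrow> (\<forall>i<Suc k. y div p^i mod p = 0)"
    using Suc by (auto simp: less_Suc_eq)
  finally show ?case .
qed

lemma digits_sum:
  fixes p y :: nat assumes "p > 1"
  shows "y < p^a \<Longrightarrow> y = (\<Sum>i<a. (y div p^i mod p) * p^i)"
proof (induction a arbitrary: y)
  case 0 then show ?case by simp
next
  case (Suc a)
  have "y div p < p^a" using Suc.prems assms by (simp add: div_less_iff_less_mult mult.commute)
  then have IH: "y div p = (\<Sum>i<a. (y div p div p^i mod p) * p^i)" by (rule Suc.IH)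
  have "(\<Sum>i<Suc a. (y div p^i mod p) * p^i) = y mod p + (\<Sum>i<a. (y div p^Suc i mod p) * p^Suc i)"
    unfolding sum.lessThan_Suc_shift by simp
  also have "(\<Sum>i<a. (y div p^Suc i mod p) * p^Suc i) = p * (\<Sum>i<a. (y div p div p^i mod p) * p^i)"
    by (simp add: sum_distrib_left div_mult2_eq mult.commute mult.left_commute mult.assoc)
  also have "\<dots> = p * (y div p)" using IH by simp
  finally show ?case by simp
qed

lemma digits_of_sum:
  fixes p :: nat assumes "p > 0"
  shows "(\<forall>i<a. d i < p) \<Longrightarrow> (\<Sum>i<a. d i * p^i) < p^a \<and> (\<forall>j<a. (\<Sum>i<a. d i * p^i) div p^j mod p = d j)"
proof (induction a arbitrary: d)
  case 0 then show ?case by simp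
next
  case (Suc a)
  define S' where "S' = (\<Sum>i<a. d (Suc i) * p^i)"
  have IH: "S' < p^a \<and> (\<forall>j<a. S' div p^j mod p = d (Suc j))"
    unfolding S'_def using Suc.IH[of "\<lambda>i. d (Suc i)"] Suc.prems by auto
  have S: "(\<Sum>i<Suc a. d i * p^i) = d 0 + p * S'"
    unfolding S'_def sum.lessThan_Suc_shift by (simp add: sum_distrib_left mult.commute mult.left_commute)
  have d0: "d 0 < p" using Suc.prems by auto
  have "d 0 + p * S' < p^Suc a"
  proof -
    have "S' + 1 \<le> p^a" using IH by simp
    then have "p * (S' + 1) \<le> p * p^a" by (rule mult_left_mono) simp
    then show ?thesis using d0 by (simp add: algebra_simps)
  qed
  moreover have "\<forall>j<Suc a. (d 0 + p * S') div p^j mod p = d j"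
  proof (intro allI impI)
    fix j assume j: "j < Suc a"
    show "(d 0 + p * S') div p^j mod p = d j"
    proof (cases j)
      case 0 then show ?thesis using d0 by simp
    next
      case (Suc j')
      have "(d 0 + p * S') div p = S'" using d0 by simp
      then have "(d 0 + p * S') div p^j = S' div p^j'"
        using Suc by (simp add: div_mult2_eq)
      then show ?thesis using IH Suc j by simp
    qed
  qed
  ultimately show ?case using S by simp
qed

lemma pps: fixes p :: nat assumes "p > 0" shows "product_prob_space (\<lambda>_. uniform_count_measure {0..<p})"
proof -
  have "prob_space (uniform_count_measure {0..<p})" by (rule prob_space_uniform_count_measure) (use assms in auto)
  then show ?thesis by (simp add: product_prob_space_def product_prob_space_axioms_def product_sigma_finite_def
       prob_space_def finite_measure_def)
qed

lemma ps_Zp: "p > 0 \<Longrightarrow> prob_space (Zp_haar p)"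
  unfolding Zp_haar_def by (intro prob_space_PiM prob_space_uniform_count_measure) auto

definition Ev :: "nat \<Rightarrow> nat \<Rightarrow> (nat \<Rightarrow> nat) set" where
  "Ev p a = {x \<in> space (Zp_haar p). \<forall>i\<in>{..a}. x i \<in> (if i < a then {0} else {1..<p})}"

definition Cy :: "nat \<Rightarrow> nat \<Rightarrow> nat \<Rightarrow> (nat \<Rightarrow> nat) set" where
  "Cy p a y = {x \<in> space (Zp_haar p). \<forall>i\<in>{..<a}. x i \<in> {y div p^i mod p}}"

lemma space_Zp: "space (Zp_haar p) = (\<Pi>\<^sub>E i\<in>UNIV. {0..<p})"
  unfolding Zp_haar_def by (simp add: space_PiM space_uniform_count_measure)

lemma emeasure_Ev:
  assumes "p > 0"
  shows "emeasure (Zp_haar p) (Ev p a) = ennreal ((1/p)^a * (1 - 1/p))"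
proof -
  interpret P: product_prob_space "\<lambda>_. uniform_count_measure {0..<p}" UNIV using pps[OF assms] .
  have "emeasure (Zp_haar p) (Ev p a) = (\<Prod>i\<in>{..a}. emeasure (uniform_count_measure {0..<p}) (if i < a then {0} else {1..<p}))"
    unfolding Zp_haar_def Ev_def
    by (rule P.emeasure_PiM_Collect) (use assms in \<open>auto simp: sets_uniform_count_measure\<close>)
  also have "\<dots> = (\<Prod>i\<in>{..a}. ennreal (if i < a then 1/p else (p-1)/p))"
    using assms by (intro prod.cong refl) (auto simp: emeasure_uniform_count_measure ennreal_of_nat_eq_real_of_nat divide_ennreal)
  also have "\<dots> = ennreal (\<Prod>i\<in>{..a}. (if i < a then 1/p else (p-1)/p))"
    by (rule prod_ennreal) auto
  also have "(\<Prod>i\<in>{..a}. (if i < a then 1/p else (p-1)/p)) = (1/p)^a * (1 - 1/p)"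
    using assms by (simp add: lessThan_Suc_atMost[symmetric] del: lessThan_Suc_atMost) (simp add: field_simps of_nat_diff)
  finally show ?thesis .
qed

lemma emeasure_Cy:
  assumes "p > 0"
  shows "emeasure (Zp_haar p) (Cy p a y) = ennreal ((1/p)^a)"
proof -
  interpret P: product_prob_space "\<lambda>_. uniform_count_measure {0..<p}" UNIV using pps[OF assms] .
  have "emeasure (Zp_haar p) (Cy p a y) = (\<Prod>i\<in>{..<a}. emeasure (uniform_count_measure {0..<p}) {y div p^i mod p})"
    unfolding Zp_haar_def Cy_def
    by (rule P.emeasure_PiM_Collect) (use assms in \<open>auto simp: sets_uniform_count_measure\<close>)
  also have "\<dots> = (\<Prod>i\<in>{..<a}. ennreal (1/p))"
    using assms by (intro prod.cong refl) (auto simp: emeasure_uniform_count_measure ennreal_of_nat_eq_real_of_nat divide_ennreal)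
  also have "\<dots> = ennreal ((1/p)^a)"
    by (simp add: prod_ennreal[symmetric] ennreal_power)
  finally show ?thesis .
qed

lemma sets_Ev: "p > 0 \<Longrightarrow> Ev p a \<in> sets (Zp_haar p)"
proof -
  assume p: "p > 0"
  interpret P: product_prob_space "\<lambda>_. uniform_count_measure {0..<p}" UNIV using pps[OF p] .
  have "Ev p a = prod_emb UNIV (\<lambda>_. uniform_count_measure {0..<p}) {..a} (\<Pi>\<^sub>E i\<in>{..a}. (if i < a then {0} else {1..<p}))"
    unfolding Ev_def prod_emb_def Zp_haar_def by (auto simp: space_PiM space_uniform_count_measure PiE_iff split: if_splits)
  then show ?thesis unfolding Zp_haar_def
    using p by (simp add: sets_PiM_I sets_uniform_count_measure)
qed

lemma sets_Cy: "p > 0 \<Longrightarrow> Cy p a y \<in> sets (Zp_haar p)"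
proof -
  assume p: "p > 0"
  have "Cy p a y = prod_emb UNIV (\<lambda>_. uniform_count_measure {0..<p}) {..<a} (\<Pi>\<^sub>E i\<in>{..<a}. {y div p^i mod p})"
    unfolding Cy_def prod_emb_def Zp_haar_def by (auto simp: space_PiM space_uniform_count_measure PiE_iff)
  then show ?thesis unfolding Zp_haar_def
    using p by (simp add: sets_PiM_I sets_uniform_count_measure)
qed

lemma radd_simp[simp]: "radd (a,b,c) (a',b',c') = (a+a',b+b',c+c')" by (simp add: radd_def)
lemma rneg_simp[simp]: "rneg (a,b,c) = (-a,-b,-c)" by (simp add: rneg_def)
lemma rmul_simp[simp]: "rmul (a,b,c) (a',b',c') = (c*a' + b*b' + a*c', c*b' + b*c', c*c')" by (simp add: rmul_def)

definition smul :: "int \<Rightarrow> relt \<Rightarrow> relt" where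
  "smul k u = (case u of (a,b,c) \<Rightarrow> (k*a, k*b, k*c))"
lemma smul_simp[simp]: "smul k (a,b,c) = (k*a,k*b,k*c)" by (simp add: smul_def)

lemma subgroup_add: "additive_subgroup S \<Longrightarrow> u \<in> S \<Longrightarrow> v \<in> S \<Longrightarrow> radd u v \<in> S"
  by (simp add: additive_subgroup_def)
lemma subgroup_neg: "additive_subgroup S \<Longrightarrow> u \<in> S \<Longrightarrow> rneg u \<in> S"
  by (simp add: additive_subgroup_def)
lemma subgroup_zero: "additive_subgroup S \<Longrightarrow> (0,0,0) \<in> S"
  by (simp add: additive_subgroup_def)

lemma subgroup_smul_nat:
  assumes S: "additive_subgroup S" and u: "u \<in> S"
  shows "smul (int n) u \<in> S"
proof (induction n)
  case 0 then show ?case using subgroup_zero[OF S] by (cases u) simp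
next
  case (Suc n)
  have "smul (int (Suc n)) u = radd (smul (int n) u) u" by (cases u) (simp add: algebra_simps)
  then show ?case using subgroup_add[OF S Suc u] by simp
qed

lemma subgroup_smul:
  assumes S: "additive_subgroup S" and u: "u \<in> S"
  shows "smul k u \<in> S"
proof (cases "k \<ge> 0")
  case True then show ?thesis using subgroup_smul_nat[OF S u, of "nat k"] by simp
next
  case False
  have eq: "smul k u = rneg (smul (int (nat (-k))) u)" using False by (cases u) simp
  show ?thesis by (subst eq) (rule subgroup_neg[OF S subgroup_smul_nat[OF S u]])
qed

lemma subgroup_diff:
  assumes S: "additive_subgroup S" "u \<in> S" "v \<in> S" shows "radd u (rneg v) \<in> S"
  using S subgroup_add subgroup_neg by blast

lemma coset_eq_iff:
  assumes S: "additive_subgroup S"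
  shows "coset S u = coset S v \<longleftrightarrow> radd u (rneg v) \<in> S"
proof
  assume h: "coset S u = coset S v"
  have "u \<in> coset S u" unfolding coset_def using subgroup_zero[OF S]
    by (cases u) (auto intro!: exI[of _ "(0,0,0)"])
  then have "u \<in> coset S v" using h by simp
  then obtain s where s: "s \<in> S" "u = radd v s" unfolding coset_def by auto
  then have "radd u (rneg v) = s" by (cases u, cases v, cases s) simp
  then show "radd u (rneg v) \<in> S" using s by simp
next
  assume h: "radd u (rneg v) \<in> S"
  show "coset S u = coset S v"
  proof (rule set_eqI, rule iffI)
    fix w assume "w \<in> coset S u"
    then obtain s where s: "s \<in> S" "w = radd u s" unfolding coset_def by auto
    have "radd (radd u (rneg v)) s \<in> S" using subgroup_add[OF S h s(1)] .
    moreover have "w = radd v (radd (radd u (rneg v)) s)" using s(2) by (cases u, cases v, cases s) simp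
    ultimately show "w \<in> coset S v" unfolding coset_def by blast
  next
    fix w assume "w \<in> coset S v"
    then obtain s where s: "s \<in> S" "w = radd v s" unfolding coset_def by auto
    have "radd (rneg (radd u (rneg v))) s \<in> S" using subgroup_add[OF S subgroup_neg[OF S h] s(1)] .
    moreover have "w = radd u (radd (rneg (radd u (rneg v))) s)" using s(2) by (cases u, cases v, cases s) simp
    ultimately show "w \<in> coset S u" unfolding coset_def by blast
  qed
qed

lemma card_range_eq:
  assumes "\<And>u v. f u = f v \<longleftrightarrow> g u = g v"
  shows "card (range f) = card (range g) \<and> (finite (range f) \<longleftrightarrow> finite (range g))"
proof -
  define h where "h X = g (SOME u. f u = X)" for X
  have hf: "h (f u) = g u" for u
  proof -
    have "f (SOME v. f v = f u) = f u" by (rule someI) simp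
    then show ?thesis unfolding h_def using assms by blast
  qed
  have img: "range g = h ` range f"
  proof -
    have "h ` range f = range (\<lambda>u. h (f u))" by auto
    also have "\<dots> = range g" using hf by simp
    finally show ?thesis by simp
  qed
  have inj: "inj_on h (range f)"
    by (auto simp: inj_on_def hf assms)
  show ?thesis using img inj by (simp add: card_image finite_image_iff)
qed

definition Sg :: "int \<Rightarrow> int \<Rightarrow> int \<Rightarrow> relt set" where
  "Sg x z y = {(u,v,w). z dvd v \<and> x dvd (u - (v div z) * y)}"

lemma Sg_mem:
  assumes "z \<noteq> 0"
  shows "(a,b,c) \<in> Sg x z y \<longleftrightarrow> (\<exists>j k. b = j*z \<and> a = j*y + k*x)"
proof
  assume "(a,b,c) \<in> Sg x z y"
  then have h: "z dvd b" "x dvd (a - (b div z) * y)" by (auto simp: Sg_def)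
  then obtain k where k: "a - (b div z) * y = x * k" by (auto elim: dvdE)
  have "b = (b div z) * z" using h(1) by simp
  moreover have "a = (b div z) * y + k * x" using k by (simp add: algebra_simps)
  ultimately show "\<exists>j k. b = j*z \<and> a = j*y + k*x" by blast
next
  assume "\<exists>j k. b = j*z \<and> a = j*y + k*x"
  then obtain j k where jk: "b = j*z" "a = j*y + k*x" by blast
  then have "b div z = j" using assms by simp
  then show "(a,b,c) \<in> Sg x z y" using jk by (auto simp: Sg_def)
qed

lemma Sg_memI: "z \<noteq> 0 \<Longrightarrow> b = j*z \<Longrightarrow> a = j*y + k*x \<Longrightarrow> (a,b,c) \<in> Sg x z y"
  using Sg_mem by blast

lemma Sg_memE:
  assumes "z \<noteq> 0" "u \<in> Sg x z y"
  obtains a b c j k where "u = (a,b,c)" "b = j*z" "a = j*y + k*x"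
  using assms Sg_mem by (cases u) blast

lemma Sg_subgroup:
  assumes z: "z \<noteq> 0" shows "additive_subgroup (Sg x z y)"
  unfolding additive_subgroup_def
proof (intro conjI ballI)
  show "(0,0,0) \<in> Sg x z y" by (simp add: Sg_def)
next
  fix u v assume u: "u \<in> Sg x z y" and v: "v \<in> Sg x z y"
  obtain a b c j k where 1: "u = (a,b,c)" "b = j*z" "a = j*y + k*x" using Sg_memE[OF z u] .
  obtain a' b' c' j' k' where 2: "v = (a',b',c')" "b' = j'*z" "a' = j'*y + k'*x" using Sg_memE[OF z v] .
  show "radd u v \<in> Sg x z y" unfolding 1 2 radd_simp
    by (rule Sg_memI[OF z, of _ "j+j'" _ _ "k+k'"]) (simp_all add: algebra_simps)
next
  fix u assume u: "u \<in> Sg x z y"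
  obtain a b c j k where 1: "u = (a,b,c)" "b = j*z" "a = j*y + k*x" using Sg_memE[OF z u] .
  show "rneg u \<in> Sg x z y" unfolding 1 rneg_simp
    by (rule Sg_memI[OF z, of _ "-j" _ _ "-k"]) (simp_all add: algebra_simps)
qed

lemma Sg_index:
  assumes x: "x > 0" and z: "z > 0"
  shows "finite_index (Sg x z y) \<and> index (Sg x z y) = nat (x*z)"
proof -
  define g :: "relt \<Rightarrow> int \<times> int" where "g u = (case u of (a,b,c) \<Rightarrow> (b mod z, (a - (b div z) * y) mod x))" for u
  have eq: "coset (Sg x z y) u = coset (Sg x z y) v \<longleftrightarrow> g u = g v" for u v
  proof -
    obtain a b c where u: "u = (a,b,c)" by (cases u)
    obtain a' b' c' where v: "v = (a',b',c')" by (cases v)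
    have "coset (Sg x z y) u = coset (Sg x z y) v \<longleftrightarrow> radd u (rneg v) \<in> Sg x z y"
      using coset_eq_iff[OF Sg_subgroup] z by simp
    also have "\<dots> \<longleftrightarrow> z dvd (b - b') \<and> x dvd ((a - a') - ((b - b') div z) * y)"
      by (simp add: u v Sg_def)
    also have "\<dots> \<longleftrightarrow> g u = g v"
    proof
      assume h: "z dvd (b - b') \<and> x dvd ((a - a') - ((b - b') div z) * y)"
      then have bm: "b mod z = b' mod z" by (simp add: mod_eq_dvd_iff)
      have "b - b' = z * (b div z - b' div z)"
        using bm using mult_div_mod_eq[of z b] mult_div_mod_eq[of z b'] by (simp only: right_diff_distrib; linarith)
      then have q: "(b - b') div z = b div z - b' div z" using z by simp
      have "x dvd ((a - (b div z) * y) - (a' - (b' div z) * y))"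
        using h q by (simp add: algebra_simps)
      then have "(a - (b div z) * y) mod x = (a' - (b' div z) * y) mod x" by (simp add: mod_eq_dvd_iff)
      then show "g u = g v" using bm by (simp add: g_def u v)
    next
      assume "g u = g v"
      then have bm: "b mod z = b' mod z" and am: "(a - (b div z) * y) mod x = (a' - (b' div z) * y) mod x"
        by (simp_all add: g_def u v)
      have "b - b' = z * (b div z - b' div z)"
        using bm using mult_div_mod_eq[of z b] mult_div_mod_eq[of z b'] by (simp only: right_diff_distrib; linarith)
      then have q: "(b - b') div z = b div z - b' div z" using z by simp
      have dx: "x dvd ((a - (b div z) * y) - (a' - (b' div z) * y))" using am by (simp add: mod_eq_dvd_iff)
      have eqn: "(a - a') - ((b - b') div z) * y = (a - (b div z) * y) - (a' - (b' div z) * y)"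
        by (subst q) (simp add: algebra_simps)
      have "x dvd ((a - a') - ((b - b') div z) * y)" by (subst eqn) (rule dx)
      moreover have "z dvd (b - b')" using bm by (simp add: mod_eq_dvd_iff)
      ultimately show "z dvd (b - b') \<and> x dvd ((a - a') - ((b - b') div z) * y)" by blast
    qed
    finally show ?thesis .
  qed
  have rg: "range g = {0..<z} \<times> {0..<x}"
  proof (rule set_eqI, rule iffI)
    fix t assume "t \<in> range g"
    then show "t \<in> {0..<z} \<times> {0..<x}" using x z by (auto simp: g_def split: prod.splits)
  next
    fix t assume t: "t \<in> {0..<z} \<times> {0..<x}"
    obtain r s where rs: "t = (r, s)" by (cases t)
    have "g (s, r, 0) = t" using t rs x z by (simp add: g_def)
    then show "t \<in> range g" by (metis rangeI)
  qed
  have "card (range (coset (Sg x z y))) = card (range g) \<and> (finite (range (coset (Sg x z y))) \<longleftrightarrow> finite (range g))"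
    by (rule card_range_eq) (rule eq)
  then show ?thesis using rg x z unfolding finite_index_def index_def
    by (simp add: card_cartesian_product nat_mult_distrib)
qed

lemma Sg_subring:
  assumes x: "x > 0" and z: "z > 0" and xz: "x dvd z^2"
  shows "is_subring (Sg x z y)"
proof -
  have z0: "z \<noteq> 0" using z by simp
  obtain m where m: "z^2 = x * m" using xz by (auto elim: dvdE)
  have mul: "rmul u v \<in> Sg x z y" if u: "u \<in> Sg x z y" and v: "v \<in> Sg x z y" for u v
  proof -
    obtain a b c j k where 1: "u = (a,b,c)" "b = j*z" "a = j*y + k*x" using Sg_memE[OF z0 u] .
    obtain a' b' c' j' k' where 2: "v = (a',b',c')" "b' = j'*z" "a' = j'*y + k'*x" using Sg_memE[OF z0 v] .
    have e: "j*j'*z^2 = j*j'*m*x" using m by simp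
    show ?thesis unfolding 1 2 rmul_simp
      apply (rule Sg_memI[OF z0, of _ "c*j' + j*c'" _ _ "c*k' + j*j'*m + k*c'"])
      using e by (simp_all add: algebra_simps power2_eq_square)
  qed
  show ?thesis unfolding is_subring_def
    using Sg_subgroup[OF z0] Sg_index[OF x z, of y] mul
    by (auto simp: rone_def Sg_def)
qed

lemma pigeon:
  assumes S: "additive_subgroup S" and fin: "finite (range (coset S))"
  shows "\<exists>n::nat. n > 0 \<and> smul (int n) e \<in> S"
proof -
  define f where "f n = coset S (smul (int n) e)" for n :: nat
  have "range f \<subseteq> range (coset S)" unfolding f_def by auto
  then have "finite (range f)" using fin finite_subset by blast
  then have "\<not> inj f" using finite_imageD infinite_UNIV_nat by blast
  then obtain n m where nm: "n \<noteq> m" "f n = f m" unfolding inj_def by blast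
  then have "radd (smul (int n) e) (rneg (smul (int m) e)) \<in> S" unfolding f_def using coset_eq_iff[OF S] by blast
  then have A: "smul (int n - int m) e \<in> S" by (cases e) (simp add: algebra_simps)
  have B: "smul (int m - int n) e \<in> S" using subgroup_neg[OF S A] by (cases e) (simp add: algebra_simps)
  show ?thesis
  proof (cases "n < m")
    case True then show ?thesis using B by (intro exI[of _ "m - n"]) (simp add: of_nat_diff)
  next
    case False then have "m < n" using nm by simp
    then show ?thesis using A by (intro exI[of _ "n - m"]) (simp add: of_nat_diff)
  qed
qed

lemma hermite:
  assumes R: "is_subring S"
  shows "\<exists>x z y. x > 0 \<and> z > 0 \<and> 0 \<le> y \<and> y < x \<and> x dvd z^2 \<and> S = Sg x z y"
proof -
  have S: "additive_subgroup S" and fin: "finite (range (coset S))" and one: "(0,0,1) \<in> S"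
    and mulc: "\<And>u v. u \<in> S \<Longrightarrow> v \<in> S \<Longrightarrow> rmul u v \<in> S"
    using R by (auto simp: is_subring_def finite_index_def rone_def)
  define X where "X = {n::nat. n > 0 \<and> (int n, 0, 0) \<in> S}"
  define Z where "Z = {n::nat. n > 0 \<and> (\<exists>a c. (a, int n, c) \<in> S)}"
  obtain n1 where n1: "n1 > 0" "smul (int n1) (1,0,0) \<in> S" using pigeon[OF S fin] by blast
  obtain n2 where n2: "n2 > 0" "smul (int n2) (0,1,0) \<in> S" using pigeon[OF S fin] by blast
  have "n1 \<in> X" using n1 by (simp add: X_def)
  then have X1: "Least (\<lambda>n. n \<in> X) \<in> X" by (rule LeastI)
  have "n2 \<in> Z" using n2 by (auto simp: Z_def)
  then have Z1: "Least (\<lambda>n. n \<in> Z) \<in> Z" by (rule LeastI)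
  define x where "x = int (Least (\<lambda>n. n \<in> X))"
  define z where "z = int (Least (\<lambda>n. n \<in> Z))"
  have x0: "x > 0" and xS: "(x,0,0) \<in> S" using X1 by (auto simp: x_def X_def)
  have z0: "z > 0" using Z1 by (auto simp: z_def Z_def)
  obtain a0 c0 where a0: "(a0, z, c0) \<in> S" using Z1 by (auto simp: z_def Z_def)
  have xmin: "x dvd t" if t: "(t,0,0) \<in> S" for t
  proof (rule ccontr)
    assume nd: "\<not> x dvd t"
    have "radd (t,0,0) (smul (- (t div x)) (x,0,0)) \<in> S"
      using subgroup_add[OF S t subgroup_smul[OF S xS]] .
    then have "(t mod x, 0, 0) \<in> S" by (simp add: algebra_simps minus_div_mult_eq_mod [symmetric] mult.commute)
    moreover have "t mod x > 0" using nd x0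
      by (metis dvd_eq_mod_eq_0 le_less pos_mod_sign)
    ultimately have "nat (t mod x) \<in> X" by (simp add: X_def)
    then have "Least (\<lambda>n. n \<in> X) \<le> nat (t mod x)" by (rule Least_le)
    moreover have "t mod x < x" using x0 by simp
    ultimately show False unfolding x_def using \<open>t mod x > 0\<close> le_nat_iff[of "t mod x"] by (simp add: x_def)
  qed
  have zmin: "z dvd b" if t: "(a,b,c) \<in> S" for a b c
  proof (rule ccontr)
    assume nd: "\<not> z dvd b"
    have "radd (a,b,c) (smul (- (b div z)) (a0,z,c0)) \<in> S"
      using subgroup_add[OF S t subgroup_smul[OF S a0]] .
    then have "(a - b div z * a0, b mod z, c - b div z * c0) \<in> S"
      by (simp add: algebra_simps minus_div_mult_eq_mod [symmetric] mult.commute)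
    moreover have "b mod z > 0" using nd z0
      by (metis dvd_eq_mod_eq_0 le_less pos_mod_sign)
    ultimately have "nat (b mod z) \<in> Z" by (auto simp: Z_def)
    then have "Least (\<lambda>n. n \<in> Z) \<le> nat (b mod z)" by (rule Least_le)
    moreover have "b mod z < z" using z0 by simp
    ultimately show False unfolding z_def using \<open>b mod z > 0\<close> le_nat_iff[of "b mod z"] by (simp add: z_def)
  qed
  define y where "y = a0 mod x"
  have yS: "(y, z, 0) \<in> S"
  proof -
    have "radd (radd (a0,z,c0) (smul (-c0) (0,0,1))) (smul (-(a0 div x)) (x,0,0)) \<in> S"
      using subgroup_add[OF S subgroup_add[OF S a0 subgroup_smul[OF S one]] subgroup_smul[OF S xS]] .
    then show ?thesis by (simp add: y_def algebra_simps minus_div_mult_eq_mod [symmetric] mult.commute)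
  qed
  have y0: "0 \<le> y" "y < x" using x0 by (simp_all add: y_def)
  have "S = Sg x z y"
  proof (rule set_eqI)
    fix u :: relt
    obtain a b c where u: "u = (a,b,c)" by (cases u)
    show "u \<in> S \<longleftrightarrow> u \<in> Sg x z y"
    proof
      assume uS: "u \<in> S"
      then have "z dvd b" using zmin u by blast
      then obtain j where j: "b = j * z" by (metis dvd_def mult.commute)
      have "radd (radd (a,b,c) (smul (-j) (y,z,0))) (smul (-c) (0,0,1)) \<in> S"
        using subgroup_add[OF S subgroup_add[OF S uS[unfolded u] subgroup_smul[OF S yS]] subgroup_smul[OF S one]] .
      then have "(a - j*y, 0, 0) \<in> S" using j by (simp add: algebra_simps)
      then have "x dvd (a - j*y)" by (rule xmin)
      then obtain k where "a - j*y = x * k" by (auto elim: dvdE)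
      then show "u \<in> Sg x z y" unfolding u using z0
        by (intro Sg_memI[of z b j a y k x c]) (simp_all add: j algebra_simps)
    next
      assume "u \<in> Sg x z y"
      then obtain j k where jk: "b = j*z" "a = j*y + k*x" using Sg_mem[of z a b c x y] z0 u by auto
      have "radd (radd (smul j (y,z,0)) (smul k (x,0,0))) (smul c (0,0,1)) \<in> S"
        using subgroup_add[OF S subgroup_add[OF S subgroup_smul[OF S yS] subgroup_smul[OF S xS]] subgroup_smul[OF S one]] .
      then show "u \<in> S" using jk u by (simp add: algebra_simps)
    qed
  qed
  moreover have "x dvd z^2"
  proof -
    have "rmul (y,z,0) (y,z,0) \<in> S" using mulc[OF yS yS] .
    then have "(z*z, 0, 0) \<in> S" by simp
    then show ?thesis using xmin by (simp add: power2_eq_square)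
  qed
  ultimately show ?thesis using x0 z0 y0 by blast
qed

definition addmap :: "(relt \<Rightarrow> relt) \<Rightarrow> bool" where
  "addmap \<phi> \<longleftrightarrow> (\<forall>u v. \<phi> (radd u v) = radd (\<phi> u) (\<phi> v))"

lemma addD: "addmap \<phi> \<Longrightarrow> \<phi> (radd u v) = radd (\<phi> u) (\<phi> v)"
  unfolding addmap_def by blast

lemma add_zero: assumes "addmap \<phi>" shows "\<phi> (0,0,0) = (0,0,0)"
proof -
  have "\<phi> (radd (0,0,0) (0,0,0)) = radd (\<phi> (0,0,0)) (\<phi> (0,0,0))" using addD[OF assms] .
  then show ?thesis by (cases "\<phi> (0,0,0)") simp
qed

lemma add_neg: assumes "addmap \<phi>" shows "\<phi> (rneg u) = rneg (\<phi> u)"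
proof -
  have "\<phi> (radd u (rneg u)) = radd (\<phi> u) (\<phi> (rneg u))" using addD[OF assms] .
  moreover have "radd u (rneg u) = (0,0,0)" by (cases u) simp
  ultimately have "radd (\<phi> u) (\<phi> (rneg u)) = (0,0,0)" using add_zero[OF assms] by simp
  then show ?thesis by (cases "\<phi> u", cases "\<phi> (rneg u)") simp
qed

lemma add_smul_nat: assumes "addmap \<phi>" shows "\<phi> (smul (int n) u) = smul (int n) (\<phi> u)"
proof (induction n)
  case 0 then show ?case using add_zero[OF assms] by (cases u, cases "\<phi> u") simp
next
  case (Suc n)
  have "smul (int (Suc n)) u = radd (smul (int n) u) u" by (cases u) (simp add: algebra_simps)
  then have "\<phi> (smul (int (Suc n)) u) = radd (smul (int n) (\<phi> u)) (\<phi> u)"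
    using addD[OF assms] Suc by metis
  then show ?case by (cases "\<phi> u") (simp add: algebra_simps)
qed

lemma add_smul: assumes "addmap \<phi>" shows "\<phi> (smul k u) = smul k (\<phi> u)"
proof (cases "k \<ge> 0")
  case True then show ?thesis using add_smul_nat[OF assms, of "nat k"] by simp
next
  case False
  have eq: "smul k u = rneg (smul (int (nat (-k))) u)" using False by (cases u) simp
  have "\<phi> (smul k u) = rneg (smul (int (nat (-k))) (\<phi> u))"
    by (subst eq) (simp only: add_neg[OF assms] add_smul_nat[OF assms])
  then show ?thesis using False by (cases "\<phi> u") simp
qed

lemma add_diff: assumes "addmap \<phi>" shows "\<phi> (radd u (rneg v)) = radd (\<phi> u) (rneg (\<phi> v))"
  using addD[OF assms] add_neg[OF assms] by metis

definition kerc :: "nat \<Rightarrow> nat \<Rightarrow> nat \<Rightarrow> relt \<Rightarrow> bool" where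
  "kerc a1 a2 a3 t = (case t of (x,y,z) \<Rightarrow> int a1 dvd x \<and> int a2 dvd y \<and> int a3 dvd z)"

lemma qiso_unfold:
  assumes "quotient_iso S a1 a2 a3"
  obtains \<phi> where "addmap \<phi>" "\<And>u. u \<in> S \<longleftrightarrow> kerc a1 a2 a3 (\<phi> u)"
    "\<And>x y z. \<exists>u. kerc a1 a2 a3 (radd (\<phi> u) (rneg (x,y,z)))"
proof -
  obtain \<phi> where P: "(\<forall>u v. \<phi> (radd u v) = radd (\<phi> u) (\<phi> v)) \<and>
      (\<forall>u. u \<in> S \<longleftrightarrow> (case \<phi> u of (x,y,z) \<Rightarrow> int a1 dvd x \<and> int a2 dvd y \<and> int a3 dvd z)) \<and>
      (\<forall>x y z. \<exists>u. case \<phi> u of (x',y',z') \<Rightarrow>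
          int a1 dvd (x' - x) \<and> int a2 dvd (y' - y) \<and> int a3 dvd (z' - z))"
    using assms unfolding quotient_iso_def by (elim exE)
  have 1: "\<forall>u v. \<phi> (radd u v) = radd (\<phi> u) (\<phi> v)" using P by (rule conjunct1)
  have 2: "\<forall>u. u \<in> S \<longleftrightarrow> (case \<phi> u of (x,y,z) \<Rightarrow> int a1 dvd x \<and> int a2 dvd y \<and> int a3 dvd z)"
    using P by (elim conjE)
  have 3: "\<forall>x y z. \<exists>u. case \<phi> u of (x',y',z') \<Rightarrow>
          int a1 dvd (x' - x) \<and> int a2 dvd (y' - y) \<and> int a3 dvd (z' - z)"
    using P by (elim conjE)
  show ?thesis
  proof (rule that)
    show "addmap \<phi>" using 1 unfolding addmap_def .
    show "u \<in> S \<longleftrightarrow> kerc a1 a2 a3 (\<phi> u)" for u unfolding kerc_def using spec[OF 2, of u] .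
    show "\<exists>u. kerc a1 a2 a3 (radd (\<phi> u) (rneg (x,y,z)))" for x y z
    proof -
      obtain u where u: "case \<phi> u of (x',y',z') \<Rightarrow>
          int a1 dvd (x' - x) \<and> int a2 dvd (y' - y) \<and> int a3 dvd (z' - z)"
        using spec[OF spec[OF spec[OF 3, of x], of y], of z] by (elim exE)
      obtain X Y Z where xyz: "\<phi> u = (X,Y,Z)" by (cases "\<phi> u")
      have "kerc a1 a2 a3 (radd (\<phi> u) (rneg (x,y,z)))" using u unfolding xyz kerc_def by simp
      then show ?thesis by blast
    qed
  qed
qed

lemma Qexp:
  assumes q: "quotient_iso S a1 a2 a3" and d: "a2 dvd a1" "a3 dvd a2"
  shows "(\<forall>u. smul k u \<in> S) \<longleftrightarrow> int a1 dvd k"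
proof -
  obtain \<phi> where ad: "addmap \<phi>" and ker: "\<And>u. u \<in> S \<longleftrightarrow> kerc a1 a2 a3 (\<phi> u)"
    and sur: "\<And>x y z. \<exists>u. kerc a1 a2 a3 (radd (\<phi> u) (rneg (x,y,z)))"
    using qiso_unfold[OF q] by blast
  have d2: "int a2 dvd int a1" "int a3 dvd int a1" using d by (auto intro: dvd_trans)
  show ?thesis
  proof
    assume h: "\<forall>u. smul k u \<in> S"
    obtain u where u: "kerc a1 a2 a3 (radd (\<phi> u) (rneg (1,0,0)))" using sur by blast
    obtain X Y Z where xyz: "\<phi> u = (X,Y,Z)" by (cases "\<phi> u")
    have "kerc a1 a2 a3 (\<phi> (smul k u))" using h ker by blast
    then have "int a1 dvd k * X" using add_smul[OF ad] xyz by (simp add: kerc_def)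
    moreover have "int a1 dvd X - 1" using u xyz by (simp add: kerc_def)
    then have "int a1 dvd k * (X - 1)" by simp
    ultimately have "int a1 dvd k * X - k * (X - 1)" by (rule dvd_diff)
    then show "int a1 dvd k" by (simp add: algebra_simps)
  next
    assume h: "int a1 dvd k"
    show "\<forall>u. smul k u \<in> S"
    proof
      fix u
      obtain X Y Z where xyz: "\<phi> u = (X,Y,Z)" by (cases "\<phi> u")
      have "int a2 dvd k" "int a3 dvd k" using h d2 dvd_trans by blast+
      then show "smul k u \<in> S" using ker add_smul[OF ad] xyz h by (simp add: kerc_def)
    qed
  qed
qed

lemma Qcard:
  assumes S: "additive_subgroup S" and q: "quotient_iso S a1 a2 a3" and pos: "a1 > 0" "a2 > 0" "a3 > 0"
  shows "finite_index S \<and> index S = a1 * a2 * a3"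
proof -
  obtain \<phi> where ad: "addmap \<phi>" and ker: "\<And>u. u \<in> S \<longleftrightarrow> kerc a1 a2 a3 (\<phi> u)"
    and sur: "\<And>x y z. \<exists>u. kerc a1 a2 a3 (radd (\<phi> u) (rneg (x,y,z)))"
    using qiso_unfold[OF q] by blast
  define g :: "relt \<Rightarrow> relt" where "g u = (case \<phi> u of (X,Y,Z) \<Rightarrow> (X mod int a1, Y mod int a2, Z mod int a3))" for u
  have eq: "coset S u = coset S v \<longleftrightarrow> g u = g v" for u v
  proof -
    obtain X Y Z where 1: "\<phi> u = (X,Y,Z)" by (cases "\<phi> u")
    obtain X' Y' Z' where 2: "\<phi> v = (X',Y',Z')" by (cases "\<phi> v")
    have "coset S u = coset S v \<longleftrightarrow> kerc a1 a2 a3 (\<phi> (radd u (rneg v)))"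
      using coset_eq_iff[OF S] ker by simp
    also have "\<dots> \<longleftrightarrow> g u = g v"
      by (simp add: add_diff[OF ad] 1 2 kerc_def g_def mod_eq_dvd_iff)
    finally show ?thesis .
  qed
  have rg: "range g = {0..<int a1} \<times> {0..<int a2} \<times> {0..<int a3}"
  proof (rule set_eqI, rule iffI)
    fix t assume "t \<in> range g"
    then obtain u where tu: "t = g u" by blast
    obtain X Y Z where 1: "\<phi> u = (X,Y,Z)" by (cases "\<phi> u")
    have "t = (X mod int a1, Y mod int a2, Z mod int a3)" using tu 1 by (simp add: g_def)
    then show "t \<in> {0..<int a1} \<times> {0..<int a2} \<times> {0..<int a3}" using pos by simp
  next
    fix t assume t: "t \<in> {0..<int a1} \<times> {0..<int a2} \<times> {0..<int a3}"
    obtain r s w where rs: "t = (r, s, w)" by (cases t)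
    obtain u where u: "kerc a1 a2 a3 (radd (\<phi> u) (rneg (r,s,w)))" using sur by blast
    obtain X Y Z where 1: "\<phi> u = (X,Y,Z)" by (cases "\<phi> u")
    have "X mod int a1 = r mod int a1" "Y mod int a2 = s mod int a2" "Z mod int a3 = w mod int a3"
      using u 1 by (simp_all add: kerc_def mod_eq_dvd_iff)
    then have "g u = t" using t rs 1 by (simp add: g_def)
    then show "t \<in> range g" by (metis rangeI)
  qed
  have "card (range (coset S)) = card (range g) \<and> (finite (range (coset S)) \<longleftrightarrow> finite (range g))"
    by (rule card_range_eq) (rule eq)
  then show ?thesis using rg pos unfolding finite_index_def index_def
    by (simp add: card_cartesian_product nat_mult_distrib)
qed

definition det3 :: "int \<Rightarrow> int \<Rightarrow> int \<Rightarrow> int \<Rightarrow> int \<Rightarrow> int \<Rightarrow> int \<Rightarrow> int \<Rightarrow> int \<Rightarrow> int" where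
  "det3 m11 m12 m13 m21 m22 m23 m31 m32 m33 =
     m11*(m22*m33 - m23*m32) - m12*(m21*m33 - m23*m31) + m13*(m21*m32 - m22*m31)"

lemma det3_cong:
  assumes "m11 mod n = l11 mod n" "m12 mod n = l12 mod n" "m13 mod n = l13 mod n"
          "m21 mod n = l21 mod n" "m22 mod n = l22 mod n" "m23 mod n = l23 mod n"
          "m31 mod n = l31 mod n" "m32 mod n = l32 mod n" "m33 mod n = l33 mod n"
  shows "det3 m11 m12 m13 m21 m22 m23 m31 m32 m33 mod n = det3 l11 l12 l13 l21 l22 l23 l31 l32 l33 mod n"
  unfolding det3_def
  by (intro mod_add_cong mod_diff_cong mod_mult_cong assms)

lemma det3_rank2:
  "det3 (p1*A1 + q1*B1) (p1*A2 + q1*B2) (p1*A3 + q1*B3)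
        (p2*A1 + q2*B1) (p2*A2 + q2*B2) (p2*A3 + q2*B3)
        (p3*A1 + q3*B1) (p3*A2 + q3*B2) (p3*A3 + q3*B3) = 0"
  unfolding det3_def by (simp add: algebra_simps)

lemma modfix:
  fixes n m :: int
  assumes "C mod n = 0" "n dvd m" "m dvd (p*A+q*B+r*C) - Y"
  shows "(p*A+q*B) mod n = Y mod n"
proof -
  have "n dvd (p*A+q*B+r*C) - Y" using assms(2,3) by (rule dvd_trans)
  moreover have "n dvd r*C" using assms(1) by (simp add: mod_0_imp_dvd)
  ultimately have "n dvd ((p*A+q*B+r*C) - Y) - r*C" by (rule dvd_diff)
  then have "n dvd (p*A+q*B) - Y" by (simp add: algebra_simps)
  then show ?thesis by (simp add: mod_eq_dvd_iff)
qed

lemma Qdet: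
  assumes q: "quotient_iso S a1 a2 a3" and d: "a2 dvd a1" "a3 dvd a2" and one: "(0,0,1) \<in> S"
  shows "a3 = 1"
proof -
  obtain \<phi> where ad: "addmap \<phi>" and ker: "\<And>u. u \<in> S \<longleftrightarrow> kerc a1 a2 a3 (\<phi> u)"
    and sur: "\<And>x y z. \<exists>u. kerc a1 a2 a3 (radd (\<phi> u) (rneg (x,y,z)))"
    using qiso_unfold[OF q] by blast
  define n where "n = int a3"
  have n1: "n dvd int a1" "n dvd int a2" using d unfolding n_def by (auto intro: dvd_trans)
  obtain A1 A2 A3 where A: "\<phi> (1,0,0) = (A1,A2,A3)" by (cases "\<phi> (1,0,0)")
  obtain B1 B2 B3 where B: "\<phi> (0,1,0) = (B1,B2,B3)" by (cases "\<phi> (0,1,0)")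
  obtain C1 C2 C3 where C: "\<phi> (0,0,1) = (C1,C2,C3)" by (cases "\<phi> (0,0,1)")
  have lin: "\<phi> (a,b,c) = (a*A1 + b*B1 + c*C1, a*A2 + b*B2 + c*C2, a*A3 + b*B3 + c*C3)" for a b c
  proof -
    have "(a,b,c) = radd (radd (smul a (1,0,0)) (smul b (0,1,0))) (smul c (0,0,1))" by simp
    then have "\<phi> (a,b,c) = radd (radd (smul a (\<phi> (1,0,0))) (smul b (\<phi> (0,1,0)))) (smul c (\<phi> (0,0,1)))"
      using addD[OF ad] add_smul[OF ad] by metis
    then show ?thesis using A B C by simp
  qed
  have Cn: "C1 mod n = 0" "C2 mod n = 0" "C3 mod n = 0"
    using ker[of "(0,0,1)"] one C n1 unfolding kerc_def n_def by (auto intro: dvd_trans)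
  obtain u1 where u1: "kerc a1 a2 a3 (radd (\<phi> u1) (rneg (1,0,0)))" using sur by blast
  obtain u2 where u2: "kerc a1 a2 a3 (radd (\<phi> u2) (rneg (0,1,0)))" using sur by blast
  obtain u3 where u3: "kerc a1 a2 a3 (radd (\<phi> u3) (rneg (0,0,1)))" using sur by blast
  obtain p1 q1 r1 where U1: "u1 = (p1,q1,r1)" by (cases u1)
  obtain p2 q2 r2 where U2: "u2 = (p2,q2,r2)" by (cases u2)
  obtain p3 q3 r3 where U3: "u3 = (p3,q3,r3)" by (cases u3)
  have n3: "n dvd int a3" unfolding n_def by simp
  have k1: "int a1 dvd (p1*A1+q1*B1+r1*C1) - 1" "int a2 dvd (p1*A2+q1*B2+r1*C2) - 0" "int a3 dvd (p1*A3+q1*B3+r1*C3) - 0"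
    using u1 U1 lin by (simp_all add: kerc_def)
  have k2: "int a1 dvd (p2*A1+q2*B1+r2*C1) - 0" "int a2 dvd (p2*A2+q2*B2+r2*C2) - 1" "int a3 dvd (p2*A3+q2*B3+r2*C3) - 0"
    using u2 U2 lin by (simp_all add: kerc_def)
  have k3: "int a1 dvd (p3*A1+q3*B1+r3*C1) - 0" "int a2 dvd (p3*A2+q3*B2+r3*C2) - 0" "int a3 dvd (p3*A3+q3*B3+r3*C3) - 1"
    using u3 U3 lin by (simp_all add: kerc_def)
  note mf1 = modfix[OF Cn(1) n1(1)] and mf2 = modfix[OF Cn(2) n1(2)] and mf3 = modfix[OF Cn(3) n3]
  have E1: "(p1*A1 + q1*B1) mod n = 1 mod n" "(p1*A2 + q1*B2) mod n = 0 mod n" "(p1*A3 + q1*B3) mod n = 0 mod n"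
    using mf1[OF k1(1)] mf2[OF k1(2)] mf3[OF k1(3)] .
  have E2: "(p2*A1 + q2*B1) mod n = 0 mod n" "(p2*A2 + q2*B2) mod n = 1 mod n" "(p2*A3 + q2*B3) mod n = 0 mod n"
    using mf1[OF k2(1)] mf2[OF k2(2)] mf3[OF k2(3)] .
  have E3: "(p3*A1 + q3*B1) mod n = 0 mod n" "(p3*A2 + q3*B2) mod n = 0 mod n" "(p3*A3 + q3*B3) mod n = 1 mod n"
    using mf1[OF k3(1)] mf2[OF k3(2)] mf3[OF k3(3)] .
  have "det3 (p1*A1 + q1*B1) (p1*A2 + q1*B2) (p1*A3 + q1*B3)
        (p2*A1 + q2*B1) (p2*A2 + q2*B2) (p2*A3 + q2*B3)
        (p3*A1 + q3*B1) (p3*A2 + q3*B2) (p3*A3 + q3*B3) mod n = det3 1 0 0 0 1 0 0 0 1 mod n"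
    by (rule det3_cong) (fact E1 E2 E3)+
  then have "0 mod n = det3 1 0 0 0 1 0 0 0 1 mod n" by (simp only: det3_rank2)
  then have "0 mod n = 1 mod n" by (simp add: det3_def)
  then have "n dvd 0 - 1" by (simp only: mod_eq_dvd_iff)
  then have "n dvd 1" by simp
  then show ?thesis unfolding n_def by (metis int_dvd_int_iff nat_dvd_1_iff_1 of_nat_1)
qed

lemma qisoI:
  assumes "addmap \<phi>" "\<And>u. u \<in> S \<longleftrightarrow> kerc a1 a2 a3 (\<phi> u)"
    "\<And>x y z. \<exists>u. kerc a1 a2 a3 (radd (\<phi> u) (rneg (x,y,z)))"
  shows "quotient_iso S a1 a2 a3"
  unfolding quotient_iso_def
proof (rule exI[of _ \<phi>], intro conjI allI)
  show "\<phi> (radd u v) = radd (\<phi> u) (\<phi> v)" for u v using addD[OF assms(1)] .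
  show "(u \<in> S) = (case \<phi> u of (x, y, z) \<Rightarrow> int a1 dvd x \<and> int a2 dvd y \<and> int a3 dvd z)" for u
    using assms(2)[of u] unfolding kerc_def .
  show "\<exists>u. case \<phi> u of (x', y', z') \<Rightarrow> int a1 dvd x' - x \<and> int a2 dvd y' - y \<and> int a3 dvd z' - z" for x y z
  proof -
    obtain u where u: "kerc a1 a2 a3 (radd (\<phi> u) (rneg (x,y,z)))" using assms(3) by blast
    obtain X Y Z where xyz: "\<phi> u = (X,Y,Z)" by (cases "\<phi> u")
    have "case \<phi> u of (x', y', z') \<Rightarrow> int a1 dvd x' - x \<and> int a2 dvd y' - y \<and> int a3 dvd z' - z"
      using u unfolding xyz kerc_def by simp
    then show ?thesis by (rule exI)
  qed
qed

lemma linmap_add: "addmap (\<lambda>(u,v,w). (kk1 * u + kk2* v, kk3 * u + kk4* v, 0))"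
  unfolding addmap_def by (auto simp: algebra_simps)

lemma cotype_unique:
  assumes S: "additive_subgroup S" and one: "(0,0,1) \<in> S"
    and q: "quotient_iso S c1 c2 1" and pos: "c1 > 0" "c2 > 0" and d: "c2 dvd c1"
  shows "cotype S = (c1, c2, 1)"
  unfolding cotype_def
proof (rule the_equality)
  show "is_cotype S (c1, c2, 1)" using pos d q by (simp add: is_cotype_def)
next
  fix b assume "is_cotype S b"
  then obtain b1 b2 b3 where b: "b = (b1,b2,b3)" "b1 > 0" "b2 > 0" "b3 > 0" "b2 dvd b1" "b3 dvd b2"
    "quotient_iso S b1 b2 b3" unfolding is_cotype_def by (cases b) auto
  have b3: "b3 = 1" using Qdet[OF b(7) b(5) b(6) one] .
  have "int b1 dvd k \<longleftrightarrow> int c1 dvd k" for k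
    using Qexp[OF b(7) b(5) b(6), of k] Qexp[OF q d, of k] by simp
  then have "int b1 dvd int c1" "int c1 dvd int b1" by (metis dvd_refl)+
  then have b1: "b1 = c1" by (simp add: dvd_antisym)
  have "b1 * b2 * b3 = c1 * c2 * 1"
    using Qcard[OF S b(7) b(2-4)] Qcard[OF S q pos] by simp
  then have "b2 = c2" using b1 b3 pos by simp
  then show "b = (c1, c2, 1)" using b b1 b3 by simp
qed

lemma cotype_Sg:
  fixes p a c y m :: nat
  assumes p: "prime p" and m: "m \<le> min a c" "p^m dvd y" "\<And>k. k \<le> min a c \<Longrightarrow> p^k dvd y \<Longrightarrow> k \<le> m"
  shows "cotype (Sg (int p^a) (int p^c) (int y)) = (p^(a+c-m), p^m, 1)"
proof -
  define x where "x = int p^a"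
  define z where "z = int p^c"
  define Y where "Y = int y"
  define S where "S = Sg x z Y"
  have p1: "p > 1" using p prime_gt_1_nat by blast
  have x0: "x > 0" and z0: "z > 0" using p1 by (simp_all add: x_def z_def)
  have S: "additive_subgroup S" unfolding S_def using Sg_subgroup z0 by simp
  have one: "(0,0,1) \<in> S" unfolding S_def by (simp add: Sg_def)
  have pos: "p^(a+c-m) > 0" "p^m > 0" using p1 by simp_all
  have d: "p^m dvd p^(a+c-m)" by (rule le_imp_power_dvd) (use m(1) in linarith)
  have q: "quotient_iso S (p^(a+c-m)) (p^m) 1"
  proof (cases "m = c")
    case True
    then have ac: "a + c - m = a" by simp
    have zY: "z dvd Y" using m(2) True unfolding z_def Y_def by (metis of_nat_dvd_iff of_nat_power)
    then obtain tY where tY: "Y = z * tY" by (auto elim: dvdE)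
    define \<phi> where "\<phi> = (\<lambda>(u,v,w::int). (1 * u + (-tY)* v, 0 * u + 1* v, 0::int))"
    show ?thesis unfolding ac
    proof (rule qisoI[of \<phi>])
      show "addmap \<phi>" unfolding \<phi>_def by (rule linmap_add)
    next
      fix u :: relt
      obtain a1 b1 c1 where u: "u = (a1,b1,c1)" by (cases u)
      show "u \<in> S \<longleftrightarrow> kerc (p^a) (p^m) 1 (\<phi> u)"
      proof
        assume "u \<in> S"
        then obtain j k where jk: "b1 = j * z" "a1 = j * Y + k * x" using Sg_mem[of z a1 b1 c1 x Y] z0 u S_def by auto
        have "1 * a1 + (-tY) * b1 = x * k" using jk tY by (simp add: algebra_simps)
        then have 1: "int (p^a) dvd 1 * a1 + (-tY) * b1" unfolding x_def by simp
        have 2: "int (p^m) dvd 0 * a1 + 1 * b1" using jk True unfolding z_def by simp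
        show "kerc (p^a) (p^m) 1 (\<phi> u)" unfolding u \<phi>_def kerc_def using 1 2 by simp
      next
        assume "kerc (p^a) (p^m) 1 (\<phi> u)"
        then have h: "x dvd a1 - tY * b1" "z dvd b1" using True unfolding u \<phi>_def kerc_def x_def z_def by simp_all
        then obtain j where j: "b1 = j * z" by (metis dvd_def mult.commute)
        obtain k where k: "a1 - tY * b1 = x * k" using h(1) by (auto elim: dvdE)
        show "u \<in> S" unfolding u S_def
          by (rule Sg_memI[of z b1 j a1 Y k x c1]) (use z0 j k tY in \<open>simp_all add: algebra_simps\<close>)
      qed
    next
      fix X1 X2 X3
      have "kerc (p^a) (p^m) 1 (radd (\<phi> (X1 + tY * X2, X2, 0)) (rneg (X1, X2, X3)))"
        unfolding \<phi>_def kerc_def by simp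
      then show "\<exists>u. kerc (p^a) (p^m) 1 (radd (\<phi> u) (rneg (X1, X2, X3)))" by blast
    qed
  next
    case False
    then have mc: "m < c" using m(1) by simp
    define r where "r = int p^m"
    define x1 where "x1 = int p^(a-m)"
    define z1 where "z1 = int p^(c-m)"
    obtain y1n where y1n: "y = p^m * y1n" using m(2) by (auto elim: dvdE)
    define y1 where "y1 = int y1n"
    have xr: "x = r * x1" unfolding x_def r_def x1_def using m(1) by (simp add: power_add[symmetric])
    have zr: "z = r * z1" unfolding z_def r_def z1_def using m(1) by (simp add: power_add[symmetric])
    have Yr: "Y = r * y1" unfolding Y_def r_def y1_def y1n by simp
    have r0: "r > 0" unfolding r_def using p1 by simp
    have cop: "coprime (p^(a-m)) y1n"
    proof (cases "m = a")
      case True then show ?thesis by simp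
    next
      case False
      then have "Suc m \<le> min a c" using m(1) mc by simp
      then have "\<not> p^Suc m dvd y" using m(3)[of "Suc m"] by auto
      then have "\<not> p dvd y1n" unfolding y1n by (simp add: power_Suc2 mult.commute)
      then have "coprime p y1n" using p by (simp add: prime_imp_coprime)
      then show ?thesis by simp
    qed
    obtain s t where st: "s * x1 + t * y1 = 1"
    proof -
      have "gcd x1 y1 = 1" using cop unfolding x1_def y1_def
        by (metis coprime_iff_gcd_eq_1 gcd_int_int_eq of_nat_1 of_nat_power)
      then show ?thesis using bezout_int[of x1 y1] that by auto
    qed
    have st': "1 - t * y1 = s * x1" using st by simp
    have c1eq: "int (p^(a+c-m)) = r * x1 * z1"
      unfolding r_def x1_def z1_def using m(1) by (simp add: power_add[symmetric])
    define \<phi> where "\<phi> = (\<lambda>(u,v,w::int). ((-t * z1) * u + 1* v, 1 * u + 0* v, 0::int))"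
    show ?thesis
    proof (rule qisoI[of \<phi>])
      show "addmap \<phi>" unfolding \<phi>_def by (rule linmap_add)
    next
      fix u :: relt
      obtain a1 b1 c1 where u: "u = (a1,b1,c1)" by (cases u)
      have ker: "kerc (p^(a+c-m)) (p^m) 1 (\<phi> u) \<longleftrightarrow> r * x1 * z1 dvd b1 - t * z1 * a1 \<and> r dvd a1"
        unfolding u \<phi>_def kerc_def using c1eq by (simp add: r_def algebra_simps)
      show "u \<in> S \<longleftrightarrow> kerc (p^(a+c-m)) (p^m) 1 (\<phi> u)"
      proof
        assume "u \<in> S"
        then obtain j k where jk: "b1 = j * z" "a1 = j * Y + k * x" using Sg_mem[of z a1 b1 c1 x Y] z0 u S_def by auto
        have 1: "a1 = r * (j * y1 + k * x1)" using jk xr Yr by (simp add: algebra_simps)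
        have "b1 - t * z1 * a1 = r * z1 * (j * (1 - t * y1) - t * k * x1)"
          unfolding 1 jk(1) zr by (simp add: algebra_simps)
        also have "\<dots> = r * x1 * z1 * (j * s - t * k)"
          unfolding st' by (simp add: algebra_simps)
        finally show "kerc (p^(a+c-m)) (p^m) 1 (\<phi> u)" using ker 1 by simp
      next
        assume "kerc (p^(a+c-m)) (p^m) 1 (\<phi> u)"
        then have h: "r * x1 * z1 dvd b1 - t * z1 * a1" "r dvd a1" using ker by simp_all
        obtain u' where u': "a1 = r * u'" using h(2) by (auto elim: dvdE)
        obtain n' where n': "b1 - t * z1 * a1 = r * x1 * z1 * n'" using h(1) by (auto elim: dvdE)
        have jb: "b1 = (t * u' + x1 * n') * z" using n' u' zr by (simp add: algebra_simps)
        have "a1 - (t * u' + x1 * n') * Y = r * (u'*(1 - t * y1) - x1 * n'*y1)" using u' Yr by (simp add: algebra_simps)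
        also have "\<dots> = x * (u' * s - n'*y1)" using st xr
          unfolding st' xr by (simp add: algebra_simps)
        finally have ka: "a1 = (t * u' + x1 * n') * Y + (u' * s - n'*y1) * x" by (simp add: algebra_simps)
        show "u \<in> S" unfolding u S_def
          by (rule Sg_memI[OF _ jb ka]) (use z0 in simp)
      qed
    next
      fix X1 X2 X3
      have "kerc (p^(a+c-m)) (p^m) 1 (radd (\<phi> (X2, X1 + t * z1 * X2, 0)) (rneg (X1, X2, X3)))"
        unfolding \<phi>_def kerc_def by simp
      then show "\<exists>u. kerc (p^(a+c-m)) (p^m) 1 (radd (\<phi> u) (rneg (X1, X2, X3)))" by blast
    qed
  qed
  show ?thesis
    using cotype_unique[OF S one q pos d] unfolding S_def x_def z_def Y_def .
qed

definition mm :: "nat \<Rightarrow> nat \<Rightarrow> nat \<Rightarrow> nat \<Rightarrow> nat" where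
  "mm p a c y = (GREATEST k. k \<le> min a c \<and> p^k dvd y)"

lemma mm_props:
  shows "mm p a c y \<le> min a c" "p^(mm p a c y) dvd y" "\<And>k. k \<le> min a c \<Longrightarrow> p^k dvd y \<Longrightarrow> k \<le> mm p a c y"
proof -
  have "mm p a c y \<le> min a c \<and> p^(mm p a c y) dvd y"
    unfolding mm_def by (rule GreatestI_nat[where P="\<lambda>k. k \<le> min a c \<and> p^k dvd y" and k=0 and b="min a c"]) auto
  then show "mm p a c y \<le> min a c" "p^(mm p a c y) dvd y" by auto
  show "\<And>k. k \<le> min a c \<Longrightarrow> p^k dvd y \<Longrightarrow> k \<le> mm p a c y"
    unfolding mm_def by (rule Greatest_le_nat[where b="min a c"]) auto
qed

definition Phi :: "nat \<Rightarrow> nat \<times> nat \<times> nat \<Rightarrow> relt set" where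
  "Phi p t = (case t of (a,c,y) \<Rightarrow> Sg (int p^a) (int p^c) (int y))"

definition Dset :: "nat \<Rightarrow> (nat \<times> nat \<times> nat) set" where
  "Dset p = {(a,c,y). a \<le> 2*c \<and> y < p^a}"

lemma cotype_Phi:
  assumes p: "prime p"
  shows "cotype (Phi p (a,c,y)) = (p^(a+c-mm p a c y), p^(mm p a c y), 1)"
  unfolding Phi_def using cotype_Sg[OF p mm_props] by simp

lemma zeta_Phi:
  assumes p: "prime p"
  shows "zeta_term (Phi p (a,c,y)) s1 s2 =
    of_nat (p^(a+c-mm p a c y)) powr (-s1) * of_nat (p^(mm p a c y)) powr (-s2)"
  unfolding zeta_term_def alpha1_def alpha2_def cotype_Phi[OF p] by simp

lemma Sg_eq_params:
  assumes x: "x > 0" "x' > 0" and z: "z > 0" "z' > 0" and y: "0 \<le> y" "y < x" "0 \<le> y'" "y' < x'"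
    and eq: "Sg x z y = Sg x' z' y'"
  shows "x = x' \<and> z = z' \<and> y = y'"
proof -
  have "(y, z, 0) \<in> Sg x z y" using z by (simp add: Sg_def)
  then have "(y, z, 0) \<in> Sg x' z' y'" using eq by simp
  then have zz1: "z' dvd z" by (simp add: Sg_def)
  have "(y', z', 0) \<in> Sg x' z' y'" using z by (simp add: Sg_def)
  then have "(y', z', 0) \<in> Sg x z y" using eq by simp
  then have zz2: "z dvd z'" by (simp add: Sg_def)
  have zeq: "z = z'" using zz1 zz2 z by (simp add: zdvd_antisym_nonneg)
  have "(x, 0, 0) \<in> Sg x z y" by (simp add: Sg_def)
  then have "(x, 0, 0) \<in> Sg x' z' y'" using eq by simp
  then have xx1: "x' dvd x" by (simp add: Sg_def)
  have "(x', 0, 0) \<in> Sg x' z' y'" by (simp add: Sg_def)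
  then have "(x', 0, 0) \<in> Sg x z y" using eq by simp
  then have xx2: "x dvd x'" by (simp add: Sg_def)
  have xeq: "x = x'" using xx1 xx2 x by (simp add: zdvd_antisym_nonneg)
  have "(y, z, 0) \<in> Sg x z y" using z by (simp add: Sg_def)
  then have "(y, z, 0) \<in> Sg x z y'" using eq xeq zeq by simp
  then have "x dvd y - y'" using z by (simp add: Sg_def)
  then have "y mod x = y' mod x" by (simp add: mod_eq_dvd_iff)
  then have "y = y'" using y xeq by simp
  then show ?thesis using xeq zeq by simp
qed

lemma Phi_inj:
  assumes p: "p > 1"
  shows "inj_on (Phi p) (Dset p)"
proof (rule inj_onI)
  fix t t' assume t: "t \<in> Dset p" and t': "t' \<in> Dset p" and eq: "Phi p t = Phi p t'"
  obtain a c y where 1: "t = (a,c,y)" by (cases t)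
  obtain a' c' y' where 2: "t' = (a',c',y')" by (cases t')
  have "int p^a = int p^a' \<and> int p^c = int p^c' \<and> int y = int y'"
    apply (rule Sg_eq_params)
    using t t' eq p by (simp_all add: 1 2 Dset_def Phi_def)
  then have "p^a = p^a'" "p^c = p^c'" "y = y'" by (simp_all flip: of_nat_power)
  then show "t = t'" using p 1 2 by (simp add: power_inject_exp)
qed

lemma Phi_image:
  assumes p: "prime p"
  shows "Phi p ` Dset p = p_subrings p"
proof
  have p1: "p > 1" using p prime_gt_1_nat by blast
  show "Phi p ` Dset p \<subseteq> p_subrings p"
  proof
    fix S assume "S \<in> Phi p ` Dset p"
    then obtain a c y where t: "a \<le> 2*c" "y < p^a" and S: "S = Sg (int p^a) (int p^c) (int y)"
      by (auto simp: Dset_def Phi_def)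
    have x0: "int p^a > 0" "int p^c > 0" using p1 by simp_all
    have "p^a dvd (p^c)^2" using t(1) by (simp add: power_mult[symmetric] le_imp_power_dvd mult.commute)
    then have "int p^a dvd (int p^c)^2" by (metis of_nat_dvd_iff of_nat_power)
    then have "is_subring S" using Sg_subring[OF x0] S by simp
    moreover have "index S = p^(a+c)" using Sg_index[OF x0, of "int y"] S
      by (simp add: power_add nat_mult_distrib nat_power_eq)
    ultimately show "S \<in> p_subrings p" unfolding p_subrings_def by blast
  qed
next
  have p1: "p > 1" using p prime_gt_1_nat by blast
  show "p_subrings p \<subseteq> Phi p ` Dset p"
  proof
    fix S assume "S \<in> p_subrings p"
    then have R: "is_subring S" and k: "\<exists>k. index S = p^k" unfolding p_subrings_def by auto
    obtain x z y where h: "x > 0" "z > 0" "0 \<le> y" "y < x" "x dvd z^2" "S = Sg x z y"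
      using hermite[OF R] by blast
    obtain k where k: "index S = p^k" using k by blast
    have "nat x * nat z = p^k" using Sg_index[OF h(1,2), of y] h(1,2,6) k by (simp add: nat_mult_distrib)
    then have "nat x dvd p^k" "nat z dvd p^k" by (metis dvd_triv_left dvd_triv_right)+
    then obtain a c where ac: "nat x = p^a" "nat z = p^c" using divides_primepow_nat[OF p] by blast
    have xa: "x = int p^a" and zc: "z = int p^c" using ac h(1,2) by (metis of_nat_power int_nat_eq less_le)+
    have "p^a dvd (p^c)^2" using h(5) xa zc by (metis of_nat_dvd_iff of_nat_power)
    then have "p^a dvd p^(2*c)" by (simp add: power_mult[symmetric] mult.commute)
    then have "a \<le> 2*c" using p1 by (simp add: power_dvd_imp_le)
    moreover have "nat y < p^a" using h(3,4) xa by (metis nat_less_iff of_nat_power)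
    ultimately have "(a, c, nat y) \<in> Dset p" by (simp add: Dset_def)
    moreover have "Phi p (a, c, nat y) = S" using h(3,6) xa zc by (simp add: Phi_def)
    ultimately show "S \<in> Phi p ` Dset p" by blast
  qed
qed

definition LL :: "nat \<Rightarrow> complex" where "LL p = complex_of_real (ln (real p))"

lemma cpow_nat:
  assumes "p > 0"
  shows "(of_nat (p^k) :: complex) powr w = exp (w * (of_nat k * LL p))"
proof -
  have ne: "(of_nat (p^k) :: complex) \<noteq> 0" using assms by simp
  have "ln (of_nat (p^k) :: complex) = of_real (ln (real (p^k)))"
    using assms by (simp add: Ln_of_nat del: of_nat_power)
  also have "\<dots> = of_nat k * LL p" by (simp add: LL_def ln_realpow)
  finally show ?thesis using ne by (simp add: powr_def)
qed

lemma cpow_real: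
  assumes "p > 1"
  shows "(of_real (real p powr (- real k)) :: complex) powr w = exp (w * (- (of_nat k) * LL p))"
proof -
  have pos: "real p powr (- real k) > 0" using assms by simp
  then have ne: "(of_real (real p powr (- real k)) :: complex) \<noteq> 0" by simp
  have "ln (of_real (real p powr (- real k)) :: complex) = of_real (ln (real p powr (- real k)))"
    using pos by (simp add: Ln_of_real)
  also have "\<dots> = - (of_nat k) * LL p" using assms by (simp add: LL_def ln_powr)
  finally show ?thesis using ne by (simp add: powr_def)
qed

lemma creal_pow:
  assumes "p > 0"
  shows "(of_real (real p ^ n) :: complex) = exp (of_nat n * LL p)"
proof -
  have "exp (of_nat n * LL p) = exp (LL p) ^ n" by (rule exp_of_nat_mult)
  also have "exp (LL p) = of_real (real p)" unfolding LL_def using assms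
    by (simp add: exp_of_real)
  finally show ?thesis by simp
qed

definition piece :: "nat \<Rightarrow> nat \<times> nat \<times> nat \<Rightarrow> ((nat \<Rightarrow> nat) \<times> (nat \<Rightarrow> nat) \<times> (nat \<Rightarrow> nat)) set" where
  "piece p d = (case d of (a,c,y) \<Rightarrow> Ev p a \<times> (Cy p a y \<times> Ev p c))"

definition Tv :: "nat \<Rightarrow> complex \<Rightarrow> complex \<Rightarrow> nat \<times> nat \<times> nat \<Rightarrow> complex" where
  "Tv p s1 s2 d = (case d of (a,c,y) \<Rightarrow>
     of_nat (p^(a+c-mm p a c y)) powr (-s1) * of_nat (p^(mm p a c y)) powr (-s2))"

definition Kv :: "nat \<Rightarrow> complex \<Rightarrow> complex \<Rightarrow> nat \<times> nat \<times> nat \<Rightarrow> complex" where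
  "Kv p s1 s2 d = (case d of (a,c,y) \<Rightarrow> of_real (real p ^ (2*a+c)) * Tv p s1 s2 d)"

lemma Ev_mem:
  "x \<in> Ev p a \<longleftrightarrow> x \<in> space (Zp_haar p) \<and> (\<forall>i<a. x i = 0) \<and> x a \<noteq> 0"
  unfolding Ev_def space_Zp by (auto simp: PiE_iff)

lemma Ev_abs:
  assumes "x \<in> Ev p a"
  shows "padic_abs p x = real p powr (- real a)"
proof -
  have h: "\<forall>i<a. x i = 0" "x a \<noteq> 0" using assms Ev_mem by auto
  have "(LEAST i. x i \<noteq> 0) = a"
    by (rule Least_equality) (use h in \<open>auto simp: not_less[symmetric]\<close>)
  then show ?thesis using h by (auto simp: padic_abs_def)
qed

lemma Cy_digit: "x \<in> Cy p a y \<Longrightarrow> i < a \<Longrightarrow> x i = y div p^i mod p"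
  by (auto simp: Cy_def)

lemma Cy_max:
  assumes p1: "p > 1" and x: "x \<in> Cy p a y"
  shows "max (real p powr (- real a)) (max (padic_abs p x) (real p powr (- real c)))
         = real p powr (- real (mm p a c y))"
proof -
  define m where "m = mm p a c y"
  have m: "m \<le> min a c" "p^m dvd y" "\<And>k. k \<le> min a c \<Longrightarrow> p^k dvd y \<Longrightarrow> k \<le> m"
    using mm_props unfolding m_def by blast+
  have I1: "x i = 0" if "i < m" for i
  proof -
    have "y div p^i mod p = 0" using pow_dvd_digits[OF p1, of m y] m(2) that by blast
    then show ?thesis using Cy_digit[OF x, of i] that m(1) by simp
  qed
  have mono: "real p powr (- real k) \<le> real p powr (- real j)" if "j \<le> k" for j k
    using p1 that by (intro powr_mono) auto
  have absle: "padic_abs p x \<le> real p powr (- real m)"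
  proof (cases "\<exists>i. x i \<noteq> 0")
    case True
    have "m \<le> (LEAST i. x i \<noteq> 0)"
    proof (rule ccontr)
      assume "\<not> m \<le> (LEAST i. x i \<noteq> 0)"
      then have "x (LEAST i. x i \<noteq> 0) = 0" using I1 by simp
      moreover have "x (LEAST i. x i \<noteq> 0) \<noteq> 0" using True by (rule LeastI_ex)
      ultimately show False by simp
    qed
    then show ?thesis using True mono by (simp add: padic_abs_def)
  next
    case False then show ?thesis by (simp add: padic_abs_def)
  qed
  show ?thesis
  proof (cases "m < min a c")
    case True
    have "\<not> p^Suc m dvd y" using m(3)[of "Suc m"] True by auto
    then obtain i where i: "i < Suc m" "y div p^i mod p \<noteq> 0" using pow_dvd_digits[OF p1, of "Suc m" y] by blast
    have "i = m"
    proof (rule ccontr)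
      assume "i \<noteq> m" then have "i < m" using i by simp
      then have "y div p^i mod p = 0" using pow_dvd_digits[OF p1, of m y] m(2) by blast
      then show False using i by simp
    qed
    then have xm: "x m \<noteq> 0" using i Cy_digit[OF x, of m] True by simp
    have "(LEAST i. x i \<noteq> 0) = m"
      by (rule Least_equality) (use xm I1 in \<open>auto simp: not_less[symmetric]\<close>)
    then have "padic_abs p x = real p powr (- real m)" using xm by (auto simp: padic_abs_def)
    moreover have "real p powr (- real a) \<le> real p powr (- real m)" "real p powr (- real c) \<le> real p powr (- real m)"
      using True by (auto intro: mono)
    ultimately show ?thesis by (simp add: m_def)
  next
    case False
    then have "m = a \<or> m = c" using m(1) by linarith
    moreover have "real p powr (- real a) \<le> real p powr (- real m)" "real p powr (- real c) \<le> real p powr (- real m)"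
      using m(1) by (auto intro: mono)
    ultimately show ?thesis using absle by (auto simp: max_def m_def)
  qed
qed

lemma sq_powr: "(real p powr (- real c))^2 = real p powr (- real (2*c))"
  by (simp add: power2_eq_square powr_add[symmetric])

lemma piece_val:
  assumes p: "prime p" and d: "(a,c,y) \<in> Dset p" and w: "w \<in> piece p (a,c,y)"
  shows "integrand p s1 s2 w = Kv p s1 s2 (a,c,y)"
proof -
  have p1: "p > 1" using p prime_gt_1_nat by blast
  have p0: "p > 0" using p1 by simp
  obtain x1 x2 x3 where wx: "w = (x1,x2,x3)" by (cases w)
  have x: "x1 \<in> Ev p a" "x2 \<in> Cy p a y" "x3 \<in> Ev p c" using w wx by (auto simp: piece_def)
  have ac: "a \<le> 2*c" using d by (simp add: Dset_def)
  define m where "m = mm p a c y"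
  have m: "m \<le> min a c" using mm_props unfolding m_def by blast
  have cond: "(padic_abs p x3)^2 \<le> padic_abs p x1"
    unfolding Ev_abs[OF x(1)] Ev_abs[OF x(3)] sq_powr using p1 ac by (intro powr_mono) auto
  have mx: "max (real p powr (- real a)) (max (padic_abs p x2) (real p powr (- real c))) = real p powr (- real m)"
    unfolding m_def by (rule Cy_max[OF p1 x(2)])
  have "integrand p s1 s2 w =
     exp ((s1 - 2) * (- (of_nat a) * LL p)) * exp ((s1 - 1) * (- (of_nat c) * LL p)) * exp ((s2 - s1) * (- (of_nat m) * LL p))"
    unfolding integrand_def wx using cond
    by (simp only: Ev_abs[OF x(1)] Ev_abs[OF x(3)] mx cpow_real[OF p1] case_prod_conv if_True)
  also have "\<dots> = exp ((s1 - 2) * (- (of_nat a) * LL p) + (s1 - 1) * (- (of_nat c) * LL p) + (s2 - s1) * (- (of_nat m) * LL p))"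
    by (simp add: mult_exp_exp)
  also have "\<dots> = exp (of_nat (2*a+c) * LL p + (-s1) * (of_nat (a+c-m) * LL p) + (-s2) * (of_nat m * LL p))"
    using m by (intro arg_cong[where f=exp]) (simp add: of_nat_diff algebra_simps)
  also have "\<dots> = Kv p s1 s2 (a,c,y)"
    unfolding Kv_def Tv_def prod.case m_def[symmetric] creal_pow[OF p0] cpow_nat[OF p0] mult_exp_exp
    by (rule arg_cong[where f=exp]) (simp add: algebra_simps)
  finally show ?thesis .
qed

lemma piece_disj:
  assumes p1: "p > 1" and d: "d \<in> Dset p" "d' \<in> Dset p" and w: "w \<in> piece p d" "w \<in> piece p d'"
  shows "d = d'"
proof -
  obtain a c y where 1: "d = (a,c,y)" by (cases d)
  obtain a' c' y' where 2: "d' = (a',c',y')" by (cases d')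
  obtain x1 x2 x3 where wx: "w = (x1,x2,x3)" by (cases w)
  have x: "x1 \<in> Ev p a" "x2 \<in> Cy p a y" "x3 \<in> Ev p c" "x1 \<in> Ev p a'" "x2 \<in> Cy p a' y'" "x3 \<in> Ev p c'"
    using w wx 1 2 by (auto simp: piece_def)
  have Ev_uniq: "k = k'" if "z \<in> Ev p k" "z \<in> Ev p k'" for z k k'
  proof (rule ccontr)
    assume "k \<noteq> k'"
    then have "k < k' \<or> k' < k" by arith
    then show False using that by (auto simp: Ev_mem)
  qed
  have aa: "a = a'" using Ev_uniq x(1,4) by blast
  have cc: "c = c'" using Ev_uniq x(3,6) by blast
  have dig: "y div p^i mod p = y' div p^i mod p" if "i < a" for i
    using Cy_digit[OF x(2) that] Cy_digit[OF x(5)] that aa by simp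
  have "y = (\<Sum>i<a. (y div p^i mod p) * p^i)" using digits_sum[OF p1] d 1 by (simp add: Dset_def)
  also have "\<dots> = (\<Sum>i<a. (y' div p^i mod p) * p^i)" using dig by simp
  also have "\<dots> = y'" using digits_sum[OF p1] d 2 aa by (simp add: Dset_def)
  finally show ?thesis using 1 2 aa cc by simp
qed

lemma piece_cover:
  assumes p: "prime p" and w: "w \<in> space (Zp3_haar p)" and nz: "integrand p s1 s2 w \<noteq> 0"
  shows "\<exists>d\<in>Dset p. w \<in> piece p d"
proof -
  have p1: "p > 1" using p prime_gt_1_nat by blast
  obtain x1 x2 x3 where wx: "w = (x1,x2,x3)" by (cases w)
  have sp: "x1 \<in> space (Zp_haar p)" "x2 \<in> space (Zp_haar p)" "x3 \<in> space (Zp_haar p)"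
    using w wx by (auto simp: Zp3_haar_def space_pair_measure)
  have lt: "x2 i < p" for i using sp(2) by (auto simp: space_Zp PiE_iff)
  have cond: "(padic_abs p x3)^2 \<le> padic_abs p x1"
    and nz1: "padic_abs p x1 \<noteq> 0" and nz3: "padic_abs p x3 \<noteq> 0"
    using nz unfolding integrand_def wx by (auto split: if_splits)
  have e1: "\<exists>i. x1 i \<noteq> 0" using nz1 by (auto simp: padic_abs_def split: if_splits)
  have e3: "\<exists>i. x3 i \<noteq> 0" using nz3 by (auto simp: padic_abs_def split: if_splits)
  define a where "a = (LEAST i. x1 i \<noteq> 0)"
  define c where "c = (LEAST i. x3 i \<noteq> 0)"
  have ev1: "x1 \<in> Ev p a" unfolding Ev_mem a_def using sp(1) e1 by (auto dest: not_less_Least intro: LeastI_ex)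
  have ev3: "x3 \<in> Ev p c" unfolding Ev_mem c_def using sp(3) e3 by (auto dest: not_less_Least intro: LeastI_ex)
  have "real p powr (- real (2*c)) \<le> real p powr (- real a)"
    using cond unfolding Ev_abs[OF ev1] Ev_abs[OF ev3] sq_powr .
  then have ac: "a \<le> 2*c" using p1 by (simp add: powr_le_cancel_iff)
  define y where "y = (\<Sum>i<a. x2 i * p^i)"
  have ds: "y < p^a \<and> (\<forall>j<a. y div p^j mod p = x2 j)"
    unfolding y_def by (rule digits_of_sum) (use p1 lt in auto)
  have cy: "x2 \<in> Cy p a y" using sp(2) ds by (auto simp: Cy_def)
  have "(a,c,y) \<in> Dset p" using ac ds by (simp add: Dset_def)
  moreover have "w \<in> piece p (a,c,y)" using ev1 ev3 cy wx by (simp add: piece_def)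
  ultimately show ?thesis by blast
qed

lemma ps_sf: "prob_space M \<Longrightarrow> sigma_finite_measure M"
  by (simp add: prob_space_def finite_measure_def)

lemma piece_sets:
  assumes "p > 0" shows "piece p d \<in> sets (Zp3_haar p)"
  unfolding piece_def Zp3_haar_def using assms
  by (auto intro!: pair_measureI sets_Ev sets_Cy split: prod.splits)

lemma piece_measure:
  assumes p1: "p > 1"
  shows "measure (Zp3_haar p) (piece p (a,c,y)) = (1 - 1/p)^2 / real p ^ (2*a+c)"
proof -
  have p0: "p > 0" using p1 by simp
  have ps: "prob_space (Zp_haar p)" using ps_Zp[OF p0] .
  have ps2: "prob_space (Zp_haar p \<Otimes>\<^sub>M Zp_haar p)" using prob_space_pair[OF ps ps] .
  have "emeasure (Zp3_haar p) (piece p (a,c,y)) =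
      emeasure (Zp_haar p) (Ev p a) * (emeasure (Zp_haar p) (Cy p a y) * emeasure (Zp_haar p) (Ev p c))"
    unfolding Zp3_haar_def piece_def
    using sigma_finite_measure.emeasure_pair_measure_Times[OF ps_sf[OF ps2] sets_Ev[OF p0] pair_measureI[OF sets_Cy[OF p0] sets_Ev[OF p0]]]
      sigma_finite_measure.emeasure_pair_measure_Times[OF ps_sf[OF ps] sets_Cy[OF p0] sets_Ev[OF p0]]
    by simp
  also have "\<dots> = ennreal ((1/p)^a * (1 - 1/p) * ((1/p)^a * ((1/p)^c * (1 - 1/p))))"
    using p1 by (simp add: emeasure_Ev emeasure_Cy p0 ennreal_mult[symmetric])
  finally have "measure (Zp3_haar p) (piece p (a,c,y)) = (1/p)^a * (1 - 1/p) * ((1/p)^a * ((1/p)^c * (1 - 1/p)))"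
    using p1 by (simp add: measure_def)
  also have "\<dots> = (1 - 1/p)^2 * ((1/p)^a * (1/p)^a * (1/p)^c)"
    by (simp only: power2_eq_square mult_ac)
  also have "(1/p)^a * (1/p)^a * (1/p)^c = 1 / real p ^ (2*a+c)"
    by (simp add: power_add mult_2 power_one_over)
  finally show ?thesis by simp
qed

lemma exp_neg_ln_pow:
  assumes "p > 0"
  shows "exp (- (real k * ln (real p))) = (1 / real p) ^ k"
proof -
  have "exp (real k * (- ln (real p))) = exp (- ln (real p)) ^ k" by (rule exp_of_nat_mult)
  moreover have "exp (- ln (real p)) = 1 / real p" using assms by (simp add: exp_minus inverse_eq_divide)
  ultimately show ?thesis by simp
qed

lemma Tv_bound:
  assumes p1: "p > 1" and s: "Re s1 \<ge> 2" "Re s2 \<ge> 2"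
  shows "norm (Tv p s1 s2 (a,c,y)) \<le> (1 / real p) ^ (2*a + 2*c)"
proof -
  have p0: "p > 0" using p1 by simp
  define m where "m = mm p a c y"
  have m: "m \<le> min a c" using mm_props unfolding m_def by blast
  define n where "n = a + c - m"
  have nm: "real n + real m = real a + real c" using m unfolding n_def by simp
  have lnp: "ln (real p) > 0" using p1 by simp
  have "Tv p s1 s2 (a,c,y) = exp ((-s1) * (of_nat n * LL p)) * exp ((-s2) * (of_nat m * LL p))"
    unfolding Tv_def prod.case m_def[symmetric] n_def[symmetric] cpow_nat[OF p0] ..
  then have "norm (Tv p s1 s2 (a,c,y)) = exp (- (Re s1 * real n * ln p)) * exp (- (Re s2 * real m * ln p))"
    by (simp add: norm_mult LL_def mult.assoc)
  also have "\<dots> = exp (- ((Re s1 * real n + Re s2 * real m) * ln p))"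
    by (simp add: exp_add[symmetric] algebra_simps)
  also have "\<dots> \<le> exp (- (real (2*a+2*c) * ln p))"
  proof -
    have "2 * real n \<le> Re s1 * real n" "2 * real m \<le> Re s2 * real m"
      using s by (simp_all add: mult_right_mono)
    then have "real (2*a+2*c) \<le> Re s1 * real n + Re s2 * real m" using nm by simp
    then have "real (2*a+2*c) * ln p \<le> (Re s1 * real n + Re s2 * real m) * ln p"
      using lnp by (simp add: mult_right_mono)
    then show ?thesis by simp
  qed
  also have "\<dots> = (1 / real p) ^ (2*a + 2*c)" by (rule exp_neg_ln_pow[OF p0])
  finally show ?thesis .
qed

lemma geom_le2:
  fixes q :: real assumes "0 \<le> q" "q \<le> 1/2"
  shows "(\<Sum>i\<le>N. q^i) \<le> 2"
proof -
  have q1: "q \<noteq> 1" using assms by simp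
  have "(\<Sum>i<Suc N. q^i) = (1 - q^Suc N) / (1 - q)" using sum_gp_strict[of q "Suc N"] q1 by simp
  then have "(\<Sum>i\<le>N. q^i) = (1 - q^Suc N) / (1 - q)" by (simp only: lessThan_Suc_atMost)
  also have "\<dots> \<le> 1 / (1 - q)" using assms by (intro divide_right_mono) auto
  also have "\<dots> \<le> 2" using assms by (simp add: field_simps)
  finally show ?thesis .
qed

definition Box :: "nat \<Rightarrow> nat \<Rightarrow> (nat \<times> nat \<times> nat) set" where
  "Box p N = Sigma {..N} (\<lambda>a. Sigma {..N} (\<lambda>c. {..<p^a}))"

lemma Box_sum:
  fixes g :: "nat \<times> nat \<times> nat \<Rightarrow> real"
  shows "(\<Sum>d\<in>Box p N. g d) = (\<Sum>a\<le>N. \<Sum>c\<le>N. \<Sum>y<p^a. g (a,c,y))"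
proof -
  have 1: "(\<Sum>a\<le>N. \<Sum>cy\<in>Sigma {..N} (\<lambda>c. {..<p^a}). g (a,cy)) = (\<Sum>(a,cy)\<in>Box p N. g (a,cy))"
    unfolding Box_def by (rule sum.Sigma) auto
  have 2: "(\<Sum>c\<le>N. \<Sum>y<p^a. g (a,c,y)) = (\<Sum>(c,y)\<in>Sigma {..N} (\<lambda>c. {..<p^a}). g (a,c,y))" for a
    by (rule sum.Sigma) auto
  show ?thesis using 1 2 by (simp add: split_def)
qed

lemma norm_sum_bound:
  assumes p1: "p > 1" and s: "Re s1 \<ge> 2" "Re s2 \<ge> 2"
    and F: "finite F" "F \<subseteq> Dset p"
  shows "(\<Sum>d\<in>F. norm (Tv p s1 s2 d)) \<le> 4"
proof -
  define N where "N = Max (insert 0 ((\<lambda>d. fst d + fst (snd d)) ` F))"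
  define bnd :: "nat \<times> nat \<times> nat \<Rightarrow> real" where "bnd d = (case d of (a,c,y) \<Rightarrow> (1 / real p) ^ (2*a + 2*c))" for d
  have FB: "F \<subseteq> Box p N"
  proof
    fix d assume d: "d \<in> F"
    obtain a c y where dd: "d = (a,c,y)" by (cases d)
    have "fst d + fst (snd d) \<le> N" unfolding N_def using F(1) d by (intro Max_ge) auto
    moreover have "y < p^a" using d F(2) dd by (auto simp: Dset_def)
    ultimately show "d \<in> Box p N" using dd by (auto simp: Box_def)
  qed
  have finB: "finite (Box p N)" unfolding Box_def by auto
  have "(\<Sum>d\<in>F. norm (Tv p s1 s2 d)) \<le> (\<Sum>d\<in>F. bnd d)"
    by (intro sum_mono) (auto simp: bnd_def Tv_bound[OF p1 s] split: prod.splits)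
  also have "\<dots> \<le> (\<Sum>d\<in>Box p N. bnd d)"
    by (intro sum_mono2 finB FB) (auto simp: bnd_def split: prod.splits)
  also have "\<dots> = (\<Sum>a\<le>N. \<Sum>c\<le>N. \<Sum>y<p^a. (1 / real p) ^ (2*a + 2*c))"
    unfolding Box_sum bnd_def by simp
  also have "\<dots> = (\<Sum>a\<le>N. \<Sum>c\<le>N. (1 / real p) ^ a * ((1 / real p)^2) ^ c)"
  proof (intro sum.cong refl)
    fix a c
    have e1: "(1 / real p) ^ (2*a + 2*c) = ((1 / real p)^2)^a * ((1 / real p)^2) ^ c"
      by (simp only: power_add power_mult)
    have e3: "((1 / real p)^2)^a = (1 / real p)^a * (1 / real p)^a"
      by (simp only: power2_eq_square power_mult_distrib)
    have e2: "real (p^a) * (1 / real p)^a = 1" using p1 by (simp add: power_one_over)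
    have "real (p^a) * (1 / real p) ^ (2*a + 2*c) = (real (p^a) * (1 / real p)^a) * ((1 / real p)^a * ((1 / real p)^2) ^ c)"
      unfolding e1 e3 by (simp only: mult.assoc)
    then have "real (p^a) * (1 / real p) ^ (2*a + 2*c) = (1 / real p) ^ a * ((1 / real p)^2) ^ c"
      unfolding e2 by simp
    then show "(\<Sum>y<p^a. (1 / real p) ^ (2*a + 2*c)) = (1 / real p) ^ a * ((1 / real p)^2) ^ c"
      by simp
  qed
  also have "\<dots> = (\<Sum>a\<le>N. (1 / real p) ^ a) * (\<Sum>c\<le>N. ((1 / real p)^2) ^ c)"
    by (rule sum_product[symmetric])
  also have "\<dots> \<le> 2 * 2"
  proof (intro mult_mono geom_le2)
    have "1 / real p \<le> 1/2" using p1 by (simp add: field_simps)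
    moreover have "(1 / real p)^2 \<le> 1 / real p" using p1 by (simp add: power2_eq_square field_simps)
    ultimately show "(1 / real p) \<le> 1/2" "(1 / real p)^2 \<le> 1/2" by linarith+
  qed (auto intro: sum_nonneg)
  finally show ?thesis by simp
qed

lemma norm_summable:
  assumes p1: "p > 1" and s: "Re s1 \<ge> 2" "Re s2 \<ge> 2"
  shows "(\<lambda>d. norm (Tv p s1 s2 d)) summable_on Dset p"
  by (rule nonneg_bdd_above_summable_on) (auto intro!: bdd_aboveI[of _ 4] norm_sum_bound[OF p1 s])

lemma Zp3_ps: "p > 0 \<Longrightarrow> prob_space (Zp3_haar p)"
  unfolding Zp3_haar_def by (intro prob_space_pair ps_Zp)

lemma Dset_infinite: "infinite (Dset p)"
proof -
  have "inj (\<lambda>c::nat. (0::nat, c, 0::nat))" by (auto simp: inj_def)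
  moreover have "range (\<lambda>c. (0::nat, c, 0::nat)) \<subseteq> Dset p" by (auto simp: Dset_def)
  ultimately show ?thesis using infinite_iff_countable_subset by blast
qed

lemma main:
  assumes p: "prime p" and s: "Re s1 \<ge> 2" "Re s2 \<ge> 2"
  shows "integrable (Zp3_haar p) (integrand p s1 s2) \<and>
         ((\<lambda>S. zeta_term S s1 s2) has_sum
            (complex_of_real (inverse ((1 - 1 / real p)^2)) * integral\<^sup>L (Zp3_haar p) (integrand p s1 s2)))
         (p_subrings p)"
proof -
  have p1: "p > 1" using p prime_gt_1_nat by blast
  have p0: "p > 0" using p1 by simp
  define D where "D = Dset p"
  define T where "T = Tv p s1 s2"
  define M where "M = Zp3_haar p"
  define cc where "cc = (1 - 1 / real p)^2"
  have cc0: "cc \<noteq> 0" unfolding cc_def using p1 by simp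
  have nsum: "(\<lambda>d. norm (T d)) summable_on D" unfolding T_def D_def by (rule norm_summable[OF p1 s])
  have Tsum: "T summable_on D" using nsum by (rule abs_summable_summable)
  define Z where "Z = infsum T D"
  have hasT: "(T has_sum Z) D" unfolding Z_def using Tsum by (rule has_sum_infsum)
  have zeta: "((\<lambda>S. zeta_term S s1 s2) has_sum Z) (p_subrings p)"
  proof -
    have "((\<lambda>S. zeta_term S s1 s2) \<circ> Phi p has_sum Z) D \<longleftrightarrow> (T has_sum Z) D"
      by (rule has_sum_cong) (auto simp: T_def Tv_def zeta_Phi[OF p] split: prod.splits)
    then have "((\<lambda>S. zeta_term S s1 s2) \<circ> Phi p has_sum Z) D" using hasT by simp
    then have "((\<lambda>S. zeta_term S s1 s2) has_sum Z) (Phi p ` D)"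
      unfolding D_def by (subst has_sum_reindex[OF Phi_inj[OF p1]])
    then show ?thesis unfolding D_def Phi_image[OF p] .
  qed
  define e where "e = from_nat_into D"
  have bij: "bij_betw e UNIV D" unfolding e_def D_def
    by (rule bij_betw_from_nat_into) (simp_all add: countableI_type Dset_infinite)
  have eD: "e i \<in> D" for i using bij_betw_apply[OF bij] by simp
  have einj: "e i = e j \<Longrightarrow> i = j" for i j using bij by (auto simp: bij_betw_def inj_def)
  have esurj: "\<exists>i. e i = d" if "d \<in> D" for d using bij that by (auto simp: bij_betw_def)
  have Tsums: "(\<lambda>i. T (e i)) sums Z"
    using hasT has_sum_reindex_bij_betw[OF bij, of T Z] by (auto intro: has_sum_imp_sums)
  have nTsumm: "summable (\<lambda>i. norm (T (e i)))"
  proof -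
    have "((\<lambda>i. norm (T (e i))) has_sum infsum (\<lambda>d. norm (T d)) D) UNIV"
      using has_sum_infsum[OF nsum] has_sum_reindex_bij_betw[OF bij, of "\<lambda>d. norm (T d)"] by auto
    then show ?thesis using has_sum_imp_sums sums_summable by blast
  qed
  define K where "K = Kv p s1 s2"
  define f where "f i w = indicator (piece p (e i)) w *\<^sub>R K (e i)" for i w
  have psM: "prob_space M" unfolding M_def using Zp3_ps[OF p0] .
  have setsP: "piece p d \<in> sets M" for d unfolding M_def by (rule piece_sets[OF p0])
  have finP: "emeasure M (piece p d) < \<infinity>" for d
  proof -
    have "emeasure M (piece p d) \<le> 1" by (rule prob_space.emeasure_le_1[OF psM])
    then show ?thesis using ennreal_less_top[of 1] by (simp add: le_less_trans)
  qed
  have intf: "integrable M (f i)" for i unfolding f_def by (rule integrable_indicator[OF setsP finP])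
  have measP: "measure M (piece p (e i)) * real p ^ (case e i of (a,c,y) \<Rightarrow> 2*a+c) = cc" for i
  proof -
    obtain a c y where ei: "e i = (a,c,y)" by (cases "e i")
    show ?thesis unfolding ei M_def cc_def using piece_measure[OF p1, of a c y] p0 by simp
  qed
  have Kform: "K (e i) = of_real (real p ^ (case e i of (a,c,y) \<Rightarrow> 2*a+c)) * T (e i)" for i
    unfolding K_def T_def Kv_def by (simp split: prod.splits)
  have int_ind: "integral\<^sup>L M (indicator (piece p (e i)) :: _ \<Rightarrow> real) = measure M (piece p (e i))" for i
    using Bochner_Integration.integral_indicator[of M "piece p (e i)"] sets.Int_space_eq2[OF setsP] by simp
  have int_f: "integral\<^sup>L M (f i) = of_real cc * T (e i)" for i
  proof -
    have "integral\<^sup>L M (f i) = measure M (piece p (e i)) *\<^sub>R K (e i)"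
      unfolding f_def by (subst integral_scaleR_left) (simp_all add: int_ind integrable_real_indicator[OF setsP finP] sets.Int_space_eq2[OF setsP])
    also have "\<dots> = of_real (measure M (piece p (e i)) * real p ^ (case e i of (a,c,y) \<Rightarrow> 2*a+c)) * T (e i)"
      unfolding Kform by (simp add: scaleR_conv_of_real)
    also have "\<dots> = of_real cc * T (e i)" using measP by simp
    finally show ?thesis .
  qed
  have int_nf: "integral\<^sup>L M (\<lambda>w. norm (f i w)) = cc * norm (T (e i))" for i
  proof -
    have "(\<lambda>w. norm (f i w)) = (\<lambda>w. indicator (piece p (e i)) w *\<^sub>R norm (K (e i)))"
      unfolding f_def by (auto simp: indicator_def)
    then have "integral\<^sup>L M (\<lambda>w. norm (f i w)) = measure M (piece p (e i)) *\<^sub>R norm (K (e i))"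
      by (simp add: integral_scaleR_left int_ind integrable_real_indicator[OF setsP finP] sets.Int_space_eq2[OF setsP] del: real_scaleR_def)
    also have "\<dots> = (measure M (piece p (e i)) * real p ^ (case e i of (a,c,y) \<Rightarrow> 2*a+c)) * norm (T (e i))"
      unfolding Kform by (simp add: norm_mult norm_power del: of_real_power)
    also have "\<dots> = cc * norm (T (e i))" using measP by simp
    finally show ?thesis .
  qed
  have supp: "(\<exists>i. (\<forall>j. j \<noteq> i \<longrightarrow> f j w = 0) \<and> f i w = K (e i) \<and> w \<in> piece p (e i)) \<or> (\<forall>j. f j w = 0 \<and> w \<notin> piece p (e j))" for w
  proof (cases "\<exists>i. w \<in> piece p (e i)")
    case True
    then obtain i where i: "w \<in> piece p (e i)" by blast
    have "f j w = 0" if "j \<noteq> i" for j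
    proof -
      have "w \<notin> piece p (e j)"
        using piece_disj[OF p1 eD[unfolded D_def] eD[unfolded D_def] i] einj that by blast
      then show ?thesis by (simp add: f_def)
    qed
    moreover have "f i w = K (e i)" using i by (simp add: f_def)
    ultimately show ?thesis using i by blast
  next
    case False then show ?thesis by (simp add: f_def)
  qed
  have summ_pt: "summable (\<lambda>i. norm (f i w))" for w
    using supp[of w]
  proof
    assume "\<exists>i. (\<forall>j. j \<noteq> i \<longrightarrow> f j w = 0) \<and> f i w = K (e i) \<and> w \<in> piece p (e i)"
    then obtain i where "\<forall>j. j \<noteq> i \<longrightarrow> f j w = 0" by blast
    then show ?thesis by (intro summable_finite[of "{i}"]) auto
  next
    assume "\<forall>j. f j w = 0 \<and> w \<notin> piece p (e j)"
    then show ?thesis by simp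
  qed
  have sum_pt: "(\<Sum>i. f i w) = integrand p s1 s2 w" if w: "w \<in> space M" for w
    using supp[of w]
  proof
    assume "\<exists>i. (\<forall>j. j \<noteq> i \<longrightarrow> f j w = 0) \<and> f i w = K (e i) \<and> w \<in> piece p (e i)"
    then obtain i where i: "\<forall>j. j \<noteq> i \<longrightarrow> f j w = 0" "f i w = K (e i)" "w \<in> piece p (e i)" by blast
    have "(\<Sum>j. f j w) = sum (\<lambda>j. f j w) {i}" by (rule suminf_finite) (use i in auto)
    also have "\<dots> = K (e i)" using i by simp
    also have "\<dots> = integrand p s1 s2 w"
    proof -
      obtain a c y where ei: "e i = (a,c,y)" by (cases "e i")
      show ?thesis unfolding K_def ei
        using piece_val[OF p, of a c y w s1 s2] eD[of i] i(3) by (simp add: ei D_def)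
    qed
    finally show ?thesis .
  next
    assume h: "\<forall>j. f j w = 0 \<and> w \<notin> piece p (e j)"
    have "integrand p s1 s2 w = 0"
    proof (rule ccontr)
      assume "integrand p s1 s2 w \<noteq> 0"
      then obtain d where "d \<in> Dset p" "w \<in> piece p d" using piece_cover[OF p] w unfolding M_def by blast
      then show False using esurj[of d] h unfolding D_def by blast
    qed
    then show ?thesis using h by simp
  qed
  have summ_int: "summable (\<lambda>i. integral\<^sup>L M (\<lambda>w. norm (f i w)))"
    unfolding int_nf using summable_mult[OF nTsumm, of cc] .
  have I1: "integrable M (\<lambda>w. \<Sum>i. f i w)"
    by (rule integrable_suminf[OF intf AE_I2[OF summ_pt] summ_int])
  have I2: "(\<lambda>i. integral\<^sup>L M (f i)) sums (\<integral>w. (\<Sum>i. f i w) \<partial>M)"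
    by (rule sums_integral[OF intf AE_I2[OF summ_pt] summ_int])
  have intg: "integrable M (integrand p s1 s2)"
  proof -
    have "integrable M (\<lambda>w. \<Sum>i. f i w) \<longleftrightarrow> integrable M (integrand p s1 s2)"
      by (rule Bochner_Integration.integrable_cong) (simp_all add: sum_pt)
    then show ?thesis using I1 by simp
  qed
  have "(\<integral>w. (\<Sum>i. f i w) \<partial>M) = integral\<^sup>L M (integrand p s1 s2)"
    by (rule Bochner_Integration.integral_cong) (simp_all add: sum_pt)
  with I2 have "(\<lambda>i. of_real cc * T (e i)) sums integral\<^sup>L M (integrand p s1 s2)"
    unfolding int_f by simp
  moreover have "(\<lambda>i. of_real cc * T (e i)) sums (of_real cc * Z)" by (rule sums_mult[OF Tsums])
  ultimately have "integral\<^sup>L M (integrand p s1 s2) = of_real cc * Z" by (rule sums_unique2)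
  then have "complex_of_real (inverse cc) * integral\<^sup>L M (integrand p s1 s2) = Z"
  proof -
    have "complex_of_real (inverse cc) * complex_of_real cc = 1"
      using cc0 by (simp flip: of_real_mult)
    then show ?thesis using \<open>integral\<^sup>L M (integrand p s1 s2) = of_real cc * Z\<close>
      by (simp add: mult.assoc[symmetric])
  qed
  then show ?thesis using zeta intg unfolding M_def cc_def by simp
qed

theorem proposition4:
  fixes p :: nat
  assumes "prime p"
  shows "\<exists>C::real. \<forall>s1 s2 :: complex. Re s1 > C \<and> Re s2 > C \<longrightarrow>
     integrable (Zp3_haar p) (integrand p s1 s2) \<and>
     ((\<lambda>S. zeta_term S s1 s2) has_sum
        (complex_of_real (inverse ((1 - 1 / real p)^2)) * integral\<^sup>L (Zp3_haar p) (integrand p s1 s2)))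
       (p_subrings p)"
proof (intro exI[of _ 2] allI impI)
  fix s1 s2 :: complex assume "Re s1 > 2 \<and> Re s2 > 2"
  then show "integrable (Zp3_haar p) (integrand p s1 s2) \<and>
     ((\<lambda>S. zeta_term S s1 s2) has_sum
        (complex_of_real (inverse ((1 - 1 / real p)^2)) * integral\<^sup>L (Zp3_haar p) (integrand p s1 s2)))
       (p_subrings p)"
    using main[OF assms] by auto
qed

end
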